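(* Let $w\in S_N$, $i\in[N-1]$, $s=s_i=(i,i+1)$, and let $\tau=wsw^{-1}$ (the transposition of $w(i)$ and $w(i+1)$). Then for all $\lambda,\mu\in\Lambda_n$, $$S^{ws}_\lambda(\mu)=\begin{cases}S^w_{\tau\lambda}(\mu)+(t_{w(i+1)}-t_{w(i)})S^w_\lambda(\mu)&\text{if }\lambda_{w(i+1)}>\lambda_{w(i)},\\ S^w_{\tau\lambda}(\mu)&\text{otherwise.}\end{cases}$$ In particular, for fixed $w\in S_N$, the classes $\{S^w_\lambda\}_{\lambda\in\Lambda_n}$ form a ${\bf P}$-basis of $H_T^*(X_n)$.
   Context: ${\bf P}=\mathbb{C}[t_1,\dots,t_N]$; $\Lambda_n=\{\lambda\in\{0,1\}^N:\sum\lambda_i=n\}$. $S_N$ acts on $\{0,1\}^N$ by $(w\lambda)_j=\lambda_{w^{-1}(j)}$ and on ${\bf P}$ by $w(t_i)=t_{w(i)}$. Let $\operatorname{Func}_n$ be the set of maps $\Lambda_n\to{\bf P}$. An $\alpha\in\operatorname{Func}_n$ is a GKM class if $\alpha(\lambda)-\alpha(s_{ab}\lambda)$ is divisible by $t_a-t_b$ for every $\lambda$ and every transposition $s_{ab}$; $H_T^*(X_n)$ denotes the ${\bf P}$-module (ring) of GKM classes (the $T$-equivariant cohomology of $\operatorname{Gr}(n,N)$ via restriction to fixed points). $\operatorname{Supp}(\alpha)=\{\lambda:\alpha(\lambda)\ne0\}$. Let $\ell(\lambda)=\#\{(a,b):a<b,\lambda_a>\lambda_b\}$. Write $\mu\ge\lambda$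 if $\sum_{a\le j}\mu_a\ge\sum_{a\le j}\lambda_a$ for all $j$, and $\mu\ge_w\lambda$ if $w^{-1}\mu\ge w^{-1}\lambda$. Let $\operatorname{inv}_w(\lambda)=\{(a,b):w^{-1}(a)<w^{-1}(b),\ \lambda_a>\lambda_b\}$. The $w$-twisted Schubert class $S^w_\lambda$ is the unique GKM class such that (Stab1) $\lambda\in\operatorname{Supp}(S^w_\lambda)\subseteq\{\mu:\mu\ge_w\lambda\}$; (Stab2) $S^w_\lambda(\lambda)=\prod_{(a,b)\in\operatorname{inv}_w(\lambda)}(t_a-t_b)$; (Stab3) for all $\mu\ge_w\lambda$, $S^w_\lambda(\mu)$ is homogeneous of degree $\ell(w^{-1}\lambda)$ (zero allowed). *)

theory Defs
  imports "HOL-Library.Poly_Mapping" "HOL-Combinatorics.Combinatorics" Complex_Main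
begin

text \<open>Polynomials in variables t_a (a :: nat) with complex coefficients:
  a polynomial is a finitely supported map from monomials (finitely supported
  exponent vectors) to coefficients.  The ring P = C[t_1,...,t_N] is the
  subset Pring N of polynomials only involving the variables t_1..t_N.\<close>

type_synonym mpoly = "(nat \<Rightarrow>\<^sub>0 nat) \<Rightarrow>\<^sub>0 complex"

definition tvar :: "nat \<Rightarrow> mpoly" where
  "tvar a = Poly_Mapping.single (Poly_Mapping.single a 1) 1"

definition Pring :: "nat \<Rightarrow> mpoly set" where
  "Pring N = {p. \<forall>m \<in> Poly_Mapping.keys p. Poly_Mapping.keys m \<subseteq> {1..N}}"

definition homogeneous :: "nat \<Rightarrow> mpoly \<Rightarrow> bool" where
  "homogeneous d p \<longleftrightarrow> (\<forall>m \<in> Poly_Mapping.keys p. (\<Sum>k\<in>Poly_Mapping.keys m. Poly_Mapping.lookup m k) = d)"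

definition Lambda :: "nat \<Rightarrow> nat \<Rightarrow> (nat \<Rightarrow> nat) set" where
  "Lambda N n = {lam. (\<forall>j\<in>{1..N}. lam j \<le> 1) \<and> (\<forall>j. j \<notin> {1..N} \<longrightarrow> lam j = 0)
                    \<and> (\<Sum>j\<in>{1..N}. lam j) = n}"

definition act :: "(nat \<Rightarrow> nat) \<Rightarrow> (nat \<Rightarrow> nat) \<Rightarrow> (nat \<Rightarrow> nat)" where
  "act w lam = (\<lambda>j. lam (inv w j))"

definition GKM :: "nat \<Rightarrow> nat \<Rightarrow> ((nat \<Rightarrow> nat) \<Rightarrow> mpoly) set" where
  "GKM N n = {\<alpha>. (\<forall>lam. lam \<notin> Lambda N n \<longrightarrow> \<alpha> lam = 0)
      \<and> (\<forall>lam \<in> Lambda N n. \<alpha> lam \<in> Pring N)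
      \<and> (\<forall>lam \<in> Lambda N n. \<forall>a\<in>{1..N}. \<forall>b\<in>{1..N}. a \<noteq> b \<longrightarrow>
            (tvar a - tvar b) dvd (\<alpha> lam - \<alpha> (act (transpose a b) lam)))}"

definition len :: "nat \<Rightarrow> (nat \<Rightarrow> nat) \<Rightarrow> nat" where
  "len N lam = card {(a, b). a \<in> {1..N} \<and> b \<in> {1..N} \<and> a < b \<and> lam a > lam b}"

definition dom_ge :: "nat \<Rightarrow> (nat \<Rightarrow> nat) \<Rightarrow> (nat \<Rightarrow> nat) \<Rightarrow> bool" where
  "dom_ge N mu lam \<longleftrightarrow> (\<forall>j\<in>{1..N}. (\<Sum>a\<in>{1..j}. mu a) \<ge> (\<Sum>a\<in>{1..j}. lam a))"

definition dom_ge_w :: "nat \<Rightarrow> (nat \<Rightarrow> nat) \<Rightarrow> (nat \<Rightarrow> nat) \<Rightarrow> (nat \<Rightarrow> nat) \<Rightarrow> bool" where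
  "dom_ge_w N w mu lam \<longleftrightarrow> dom_ge N (act (inv w) mu) (act (inv w) lam)"

definition inv_w :: "nat \<Rightarrow> (nat \<Rightarrow> nat) \<Rightarrow> (nat \<Rightarrow> nat) \<Rightarrow> (nat \<times> nat) set" where
  "inv_w N w lam = {(a, b). a \<in> {1..N} \<and> b \<in> {1..N} \<and> inv w a < inv w b \<and> lam a > lam b}"

definition is_twisted_schubert ::
  "nat \<Rightarrow> nat \<Rightarrow> (nat \<Rightarrow> nat) \<Rightarrow> (nat \<Rightarrow> nat) \<Rightarrow> ((nat \<Rightarrow> nat) \<Rightarrow> mpoly) \<Rightarrow> bool" where
  "is_twisted_schubert N n w lam \<alpha> \<longleftrightarrow>
     \<alpha> \<in> GKM N n
   \<and> \<alpha> lam \<noteq> 0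
   \<and> (\<forall>mu \<in> Lambda N n. \<alpha> mu \<noteq> 0 \<longrightarrow> dom_ge_w N w mu lam)
   \<and> \<alpha> lam = (\<Prod>(a, b)\<in>inv_w N w lam. tvar a - tvar b)
   \<and> (\<forall>mu \<in> Lambda N n. dom_ge_w N w mu lam \<longrightarrow>
         homogeneous (len N (act (inv w) lam)) (\<alpha> mu))"

definition twisted_schubert ::
  "nat \<Rightarrow> nat \<Rightarrow> (nat \<Rightarrow> nat) \<Rightarrow> (nat \<Rightarrow> nat) \<Rightarrow> ((nat \<Rightarrow> nat) \<Rightarrow> mpoly)" where
  "twisted_schubert N n w lam = (THE \<alpha>. is_twisted_schubert N n w lam \<alpha>)"

end

theory Submission
  imports Defs
begin


definition cst :: "complex \<Rightarrow> mpoly" where "cst c = Poly_Mapping.single 0 c"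

definition mev :: "(nat \<Rightarrow> mpoly) \<Rightarrow> (nat \<Rightarrow>\<^sub>0 nat) \<Rightarrow> mpoly" where
  "mev \<sigma> m = (\<Prod>k\<in>Poly_Mapping.keys m. \<sigma> k ^ Poly_Mapping.lookup m k)"

definition subst :: "(nat \<Rightarrow> mpoly) \<Rightarrow> mpoly \<Rightarrow> mpoly" where
  "subst \<sigma> p = (\<Sum>m\<in>Poly_Mapping.keys p. cst (Poly_Mapping.lookup p m) * mev \<sigma> m)"

lemma cst_0[simp]: "cst 0 = 0" by (simp add: cst_def)
lemma cst_1[simp]: "cst 1 = 1" by (simp add: cst_def)
lemma cst_add: "cst (a + b) = cst a + cst b" by (simp add: cst_def single_add)
lemma cst_mult: "cst (a * b) = cst a * cst b" by (simp add: cst_def mult_single)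

lemma mev_superset:
  assumes "finite A" "Poly_Mapping.keys m \<subseteq> A"
  shows "mev \<sigma> m = (\<Prod>k\<in>A. \<sigma> k ^ Poly_Mapping.lookup m k)"
  unfolding mev_def
  by (rule prod.mono_neutral_left) (use assms in \<open>auto simp: in_keys_iff\<close>)

lemma mev_zero[simp]: "mev \<sigma> 0 = 1" by (simp add: mev_def)

lemma mev_add: "mev \<sigma> (m + m') = mev \<sigma> m * mev \<sigma> m'"
proof -
  define A where "A = Poly_Mapping.keys m \<union> Poly_Mapping.keys m'"
  have fA: "finite A" by (simp add: A_def)
  have k: "Poly_Mapping.keys (m + m') \<subseteq> A" using keys_add[of m m'] by (auto simp: A_def)
  have e1: "mev \<sigma> m = (\<Prod>k\<in>A. \<sigma> k ^ Poly_Mapping.lookup m k)" by (rule mev_superset[OF fA]) (auto simp: A_def)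
  have e2: "mev \<sigma> m' = (\<Prod>k\<in>A. \<sigma> k ^ Poly_Mapping.lookup m' k)" by (rule mev_superset[OF fA]) (auto simp: A_def)
  show ?thesis
    unfolding mev_superset[OF fA k] e1 e2
    by (auto simp: lookup_add power_add prod.distrib)
qed

lemma subst_superset:
  assumes "finite A" "Poly_Mapping.keys p \<subseteq> A"
  shows "subst \<sigma> p = (\<Sum>m\<in>A. cst (Poly_Mapping.lookup p m) * mev \<sigma> m)"
  unfolding subst_def
  by (rule sum.mono_neutral_left) (use assms in \<open>auto simp: in_keys_iff\<close>)

lemma subst_0[simp]: "subst \<sigma> 0 = 0" by (simp add: subst_def)

lemma subst_add: "subst \<sigma> (p + q) = subst \<sigma> p + subst \<sigma> q"
proof -
  define A where "A = Poly_Mapping.keys p \<union> Poly_Mapping.keys q"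
  have fA: "finite A" by (simp add: A_def)
  have k: "Poly_Mapping.keys (p + q) \<subseteq> A" using keys_add[of p q] by (auto simp: A_def)
  have e1: "subst \<sigma> p = (\<Sum>m\<in>A. cst (Poly_Mapping.lookup p m) * mev \<sigma> m)" by (rule subst_superset[OF fA]) (auto simp: A_def)
  have e2: "subst \<sigma> q = (\<Sum>m\<in>A. cst (Poly_Mapping.lookup q m) * mev \<sigma> m)" by (rule subst_superset[OF fA]) (auto simp: A_def)
  show ?thesis
    unfolding subst_superset[OF fA k] e1 e2
    by (auto simp: lookup_add cst_add distrib_right sum.distrib)
qed

lemma subst_sum: "subst \<sigma> (sum f A) = (\<Sum>x\<in>A. subst \<sigma> (f x))"
  by (induction A rule: infinite_finite_induct) (auto simp: subst_add)

lemma subst_single: "subst \<sigma> (Poly_Mapping.single m c) = cst c * mev \<sigma> m"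
  by (cases "c = 0") (auto simp: subst_def)

lemma poly_expand: "(p::'a \<Rightarrow>\<^sub>0 'b::comm_monoid_add) = (\<Sum>m\<in>Poly_Mapping.keys p. Poly_Mapping.single m (Poly_Mapping.lookup p m))"
proof (rule poly_mapping_eqI)
  fix k
  show "Poly_Mapping.lookup p k = Poly_Mapping.lookup (\<Sum>m\<in>Poly_Mapping.keys p. Poly_Mapping.single m (Poly_Mapping.lookup p m)) k"
    unfolding lookup_sum lookup_single
    by (cases "k \<in> Poly_Mapping.keys p") (auto simp: when_def in_keys_iff)
qed

lemma subst_mult: "subst \<sigma> (p * q) = subst \<sigma> p * subst \<sigma> q"
proof -
  have "p * q = (\<Sum>m\<in>Poly_Mapping.keys p. \<Sum>m'\<in>Poly_Mapping.keys q.
       Poly_Mapping.single (m + m') (Poly_Mapping.lookup p m * Poly_Mapping.lookup q m'))"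
    apply (subst poly_expand[of p], subst poly_expand[of q])
    by (simp add: sum_distrib_left sum_distrib_right mult_single sum.swap[of _ "Poly_Mapping.keys q"])
  then have "subst \<sigma> (p * q) = (\<Sum>m\<in>Poly_Mapping.keys p. \<Sum>m'\<in>Poly_Mapping.keys q.
       cst (Poly_Mapping.lookup p m) * mev \<sigma> m * (cst (Poly_Mapping.lookup q m') * mev \<sigma> m'))"
    by (simp add: subst_sum subst_single mev_add cst_mult mult_ac sum.swap[of _ "Poly_Mapping.keys q"])
  also have "\<dots> = subst \<sigma> p * subst \<sigma> q"
    unfolding subst_def sum_distrib_left sum_distrib_right by (rule sum.swap)
  finally show ?thesis .
qed

lemma subst_uminus: "subst \<sigma> (- p) = - subst \<sigma> p"
  using subst_add[of \<sigma> p "-p"] by (simp add: eq_neg_iff_add_eq_0 add.commute)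

lemma subst_diff: "subst \<sigma> (p - q) = subst \<sigma> p - subst \<sigma> q"
  using subst_add[of \<sigma> p "-q"] by (simp add: subst_uminus)

lemma subst_1[simp]: "subst \<sigma> 1 = 1"
  using subst_single[of \<sigma> 0 1] by (simp add: cst_def)

lemma subst_cst[simp]: "subst \<sigma> (cst c) = cst c"
  using subst_single[of \<sigma> 0 c] by (simp add: cst_def)

lemma mev_single: "mev \<sigma> (Poly_Mapping.single a (1::nat)) = \<sigma> a"
  unfolding mev_def by (simp add: keys_single lookup_single)

lemma subst_tvar[simp]: "subst \<sigma> (tvar a) = \<sigma> a"
  unfolding tvar_def subst_single mev_single by simp

lemma subst_power: "subst \<sigma> (p ^ k) = subst \<sigma> p ^ k"
  by (induction k) (auto simp: subst_mult)

lemma subst_prod: "subst \<sigma> (prod f A) = (\<Prod>x\<in>A. subst \<sigma> (f x))"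
  by (induction A rule: infinite_finite_induct) (auto simp: subst_mult)

lemma subst_dvd: "x dvd y \<Longrightarrow> subst \<sigma> x dvd subst \<sigma> y"
  by (auto simp: dvd_def subst_mult)

lemma tvar_pow: "tvar a ^ e = Poly_Mapping.single (Poly_Mapping.single a e) 1"
  by (induction e) (auto simp: tvar_def mult_single single_add[symmetric] add.commute)

lemma prod_single: "(\<Prod>x\<in>A. Poly_Mapping.single (f x) (1::complex)) = Poly_Mapping.single (\<Sum>x\<in>A. f x) 1"
  by (induction A rule: infinite_finite_induct) (auto simp: mult_single)

lemma mev_tvar: "mev tvar m = Poly_Mapping.single m 1"
proof -
  have "mev tvar m = Poly_Mapping.single (\<Sum>k\<in>Poly_Mapping.keys m. Poly_Mapping.single k (Poly_Mapping.lookup m k)) 1"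
    by (simp add: mev_def tvar_pow prod_single)
  also have "\<dots> = Poly_Mapping.single m 1" using poly_expand[of m] by simp
  finally show ?thesis .
qed

lemma subst_tvar_id[simp]: "subst tvar p = p"
proof -
  have "subst tvar p = (\<Sum>m\<in>Poly_Mapping.keys p. Poly_Mapping.single m (Poly_Mapping.lookup p m))"
    by (simp add: subst_def mev_tvar cst_def mult_single)
  then show ?thesis using poly_expand[of p] by simp
qed

lemma mev_subst: "subst \<sigma> (mev \<tau> m) = mev (\<lambda>k. subst \<sigma> (\<tau> k)) m"
  by (simp add: mev_def subst_prod subst_power)

lemma subst_comp: "subst \<sigma> (subst \<tau> p) = subst (\<lambda>k. subst \<sigma> (\<tau> k)) p"
  unfolding subst_def[of \<tau> p] by (simp add: subst_sum subst_mult mev_subst subst_def[of "\<lambda>k. subst \<sigma> (\<tau> k)"])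

definition vars :: "mpoly \<Rightarrow> nat set" where
  "vars p = (\<Union>m\<in>Poly_Mapping.keys p. Poly_Mapping.keys m)"

lemma mev_cong: "(\<And>k. k \<in> Poly_Mapping.keys m \<Longrightarrow> \<sigma> k = \<tau> k) \<Longrightarrow> mev \<sigma> m = mev \<tau> m"
  unfolding mev_def by (rule prod.cong) auto

lemma subst_cong: "(\<And>k. k \<in> vars p \<Longrightarrow> \<sigma> k = \<tau> k) \<Longrightarrow> subst \<sigma> p = subst \<tau> p"
  unfolding subst_def vars_def
  by (intro sum.cong refl arg_cong2[where f="(*)"] mev_cong) auto



lemma dvd_cong_mult:
  fixes d :: "'a::comm_ring_1"
  assumes "d dvd a - b" "d dvd c - e" shows "d dvd a * c - b * e"
proof -
  have "a * c - b * e = (a - b) * c + b * (c - e)" by (simp add: algebra_simps)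
  then show ?thesis using assms by (simp add: dvd_add dvd_mult2 dvd_mult)
qed

lemma dvd_cong_power:
  fixes d :: "'a::comm_ring_1"
  assumes "d dvd a - b" shows "d dvd a ^ k - b ^ k"
  by (induction k) (auto intro: dvd_cong_mult assms)

lemma dvd_cong_prod:
  fixes d :: "'a::comm_ring_1"
  assumes "\<And>x. x \<in> A \<Longrightarrow> d dvd f x - g x" shows "d dvd prod f A - prod g A"
  using assms by (induction A rule: infinite_finite_induct) (auto intro: dvd_cong_mult)

lemma dvd_subst_diff:
  assumes "\<And>k. d dvd \<sigma> k - \<tau> k" shows "d dvd subst \<sigma> p - subst \<tau> p"
proof -
  have "\<And>m. d dvd mev \<sigma> m - mev \<tau> m"
    unfolding mev_def by (intro dvd_cong_prod dvd_cong_power assms)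
  then have "d dvd (\<Sum>m\<in>Poly_Mapping.keys p. cst (Poly_Mapping.lookup p m) * (mev \<sigma> m - mev \<tau> m))"
    by (intro dvd_sum dvd_mult) auto
  then show ?thesis by (simp add: subst_def algebra_simps sum_subtractf)
qed

lemma tvar_inj[simp]: "tvar a = tvar b \<longleftrightarrow> a = b"
proof
  assume "tvar a = tvar b"
  then have "Poly_Mapping.lookup (tvar a) (Poly_Mapping.single a 1) = Poly_Mapping.lookup (tvar b) (Poly_Mapping.single a 1)" by simp
  then have "Poly_Mapping.single b (1::nat) = Poly_Mapping.single a 1"
    by (auto simp: tvar_def lookup_single when_def split: if_splits)
  then have "Poly_Mapping.lookup (Poly_Mapping.single b (1::nat)) a = Poly_Mapping.lookup (Poly_Mapping.single a 1) a" by simp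
  then show "a = b" by (auto simp: lookup_single when_def split: if_splits)
qed simp

lemma tvar_ne0[simp]: "tvar a \<noteq> 0"
  unfolding tvar_def by (metis lookup_single_eq lookup_zero one_neq_zero)

lemma tdiff_ne0: "a \<noteq> b \<Longrightarrow> tvar a - tvar b \<noteq> 0"
  by simp

definition Pperm :: "(nat \<Rightarrow> nat) \<Rightarrow> mpoly \<Rightarrow> mpoly" where
  "Pperm \<pi> p = subst (\<lambda>k. tvar (\<pi> k)) p"

lemma Pperm_tvar[simp]: "Pperm \<pi> (tvar a) = tvar (\<pi> a)" by (simp add: Pperm_def)
lemma Pperm_add: "Pperm \<pi> (p + q) = Pperm \<pi> p + Pperm \<pi> q" by (simp add: Pperm_def subst_add)
lemma Pperm_diff: "Pperm \<pi> (p - q) = Pperm \<pi> p - Pperm \<pi> q" by (simp add: Pperm_def subst_diff)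
lemma Pperm_uminus: "Pperm \<pi> (- p) = - Pperm \<pi> p" by (simp add: Pperm_def subst_uminus)
lemma Pperm_mult: "Pperm \<pi> (p * q) = Pperm \<pi> p * Pperm \<pi> q" by (simp add: Pperm_def subst_mult)
lemma Pperm_0[simp]: "Pperm \<pi> 0 = 0" by (simp add: Pperm_def)
lemma Pperm_prod: "Pperm \<pi> (prod f A) = (\<Prod>x\<in>A. Pperm \<pi> (f x))" by (simp add: Pperm_def subst_prod)
lemma Pperm_sum: "Pperm \<pi> (sum f A) = (\<Sum>x\<in>A. Pperm \<pi> (f x))" by (simp add: Pperm_def subst_sum)
lemma Pperm_comp: "Pperm \<pi> (Pperm \<rho> p) = Pperm (\<pi> \<circ> \<rho>) p" by (simp add: Pperm_def subst_comp)
lemma Pperm_id[simp]: "Pperm id p = p" by (simp add: Pperm_def)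
lemma Pperm_id'[simp]: "Pperm (\<lambda>x. x) p = p" by (simp add: Pperm_def)
lemma Pperm_dvd: "x dvd y \<Longrightarrow> Pperm \<pi> x dvd Pperm \<pi> y" by (simp add: Pperm_def subst_dvd)

lemma dvd_swap: "(tvar a - tvar b) dvd p - Pperm (transpose a b) p"
proof -
  have "(tvar a - tvar b) dvd subst tvar p - subst (\<lambda>k. tvar (transpose a b k)) p"
  proof (rule dvd_subst_diff)
    fix k
    show "(tvar a - tvar b) dvd tvar k - tvar (transpose a b k)"
    proof (cases "k = a \<or> k = b")
      case True
      then show ?thesis
      proof
        assume "k = a" then show ?thesis by (simp add: transpose_def)
      next
        assume kb: "k = b"
        show ?thesis using dvd_minus_iff[of "tvar a - tvar b" "tvar a - tvar b"] kb by (simp add: transpose_def)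
      qed
    qed (simp add: transpose_def)
  qed
  then show ?thesis by (simp add: Pperm_def)
qed

definition evab :: "nat \<Rightarrow> nat \<Rightarrow> mpoly \<Rightarrow> mpoly" where
  "evab a b p = subst (tvar(a := tvar b)) p"

lemma dvd_ev_diff: "(tvar a - tvar b) dvd p - evab a b p"
proof -
  have "(tvar a - tvar b) dvd subst tvar p - subst (tvar(a := tvar b)) p"
    by (rule dvd_subst_diff) auto
  then show ?thesis by (simp add: evab_def)
qed

lemma dvd_iff_ev: "(tvar a - tvar b) dvd p \<longleftrightarrow> evab a b p = 0"
proof
  assume "(tvar a - tvar b) dvd p"
  then obtain q where "p = (tvar a - tvar b) * q" by (auto simp: dvd_def)
  then show "evab a b p = 0" by (simp add: evab_def subst_mult subst_diff)
next
  assume "evab a b p = 0"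
  then show "(tvar a - tvar b) dvd p" using dvd_ev_diff[of a b p] by simp
qed

lemma ev_tdiff_ne:
  assumes "a \<noteq> b" "c \<noteq> e" "\<not> (c = a \<and> e = b)" "\<not> (c = b \<and> e = a)"
  shows "evab a b (tvar c - tvar e) \<noteq> 0"
  using assms by (auto simp: evab_def subst_diff)

lemma not_dvd_tdiff:
  assumes "a \<noteq> b" "c \<noteq> e" "\<not> (c = a \<and> e = b)" "\<not> (c = b \<and> e = a)"
  shows "\<not> (tvar a - tvar b) dvd (tvar c - tvar e)"
  using ev_tdiff_ne[OF assms] dvd_iff_ev by blast

lemma prime_tdiff:
  assumes "(tvar a - tvar b) dvd x * y"
  shows "(tvar a - tvar b) dvd x \<or> (tvar a - tvar b) dvd y"
  using assms unfolding dvd_iff_ev by (simp add: evab_def subst_mult)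

lemma prod_tdiff_dvd:
  assumes "finite E" "\<And>a b. (a, b) \<in> E \<Longrightarrow> a \<noteq> b"
    "\<And>a b. (a, b) \<in> E \<Longrightarrow> (b, a) \<notin> E"
    "\<And>a b. (a, b) \<in> E \<Longrightarrow> (tvar a - tvar b) dvd f"
  shows "(\<Prod>(a, b)\<in>E. tvar a - tvar b) dvd f"
  using assms
proof (induction E arbitrary: f rule: finite_induct)
  case empty
  then show ?case by simp
next
  case (insert x E)
  obtain a b where x: "x = (a, b)" by force
  have ab: "a \<noteq> b" using insert.prems(1)[of a b] x by simp
  have "(\<Prod>(a, b)\<in>E. tvar a - tvar b) dvd f"
  proof (rule insert.IH)
    fix c e assume "(c, e) \<in> E"
    then show "c \<noteq> e" "(e, c) \<notin> E" "(tvar c - tvar e) dvd f"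
      using insert.prems(1)[of c e] insert.prems(2)[of c e] insert.prems(3)[of c e] by blast+
  qed
  then obtain g where g: "f = (\<Prod>(a, b)\<in>E. tvar a - tvar b) * g" by (auto simp: dvd_def)
  have "evab a b (\<Prod>(a, b)\<in>E. tvar a - tvar b) = (\<Prod>(c, e)\<in>E. evab a b (tvar c - tvar e))"
    unfolding evab_def subst_prod by (simp add: case_prod_beta)
  also have "\<dots> \<noteq> 0"
  proof -
    have "\<And>c e. (c, e) \<in> E \<Longrightarrow> evab a b (tvar c - tvar e) \<noteq> 0"
    proof -
      fix c e assume ce: "(c, e) \<in> E"
      show "evab a b (tvar c - tvar e) \<noteq> 0"
        apply (rule ev_tdiff_ne[OF ab])
        using insert.prems(1)[of c e] insert.prems(2)[of a b] insert.hyps(2) ce x by blast+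
    qed
    then show ?thesis using insert.hyps(1) by (auto simp: prod_zero_iff)
  qed
  finally have ne: "evab a b (\<Prod>(a, b)\<in>E. tvar a - tvar b) \<noteq> 0" .
  have "evab a b f = 0" using insert.prems(3)[of a b] x dvd_iff_ev by blast
  then have "evab a b g = 0" using ne g by (simp add: evab_def subst_mult)
  then have "(tvar a - tvar b) dvd g" using dvd_iff_ev by blast
  then obtain h where "g = (tvar a - tvar b) * h" by (auto simp: dvd_def)
  then have "f = (\<Prod>(a, b)\<in>insert x E. tvar a - tvar b) * h"
    using g x insert.hyps by (simp add: mult_ac)
  then show ?case by simp
qed



lemma Pring_iff: "p \<in> Pring N \<longleftrightarrow> vars p \<subseteq> {1..N}"
  by (auto simp: Pring_def vars_def)

lemma Pring_0[simp]: "0 \<in> Pring N" by (simp add: Pring_def)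

lemma Pring_add: "p \<in> Pring N \<Longrightarrow> q \<in> Pring N \<Longrightarrow> p + q \<in> Pring N"
  unfolding Pring_def using keys_add[of p q] by blast

lemma Pring_uminus: "p \<in> Pring N \<Longrightarrow> - p \<in> Pring N"
  unfolding Pring_def by simp

lemma Pring_diff: "p \<in> Pring N \<Longrightarrow> q \<in> Pring N \<Longrightarrow> p - q \<in> Pring N"
  using Pring_add[of p N "-q"] Pring_uminus[of q N] by simp

lemma Pring_mult: "p \<in> Pring N \<Longrightarrow> q \<in> Pring N \<Longrightarrow> p * q \<in> Pring N"
proof -
  assume p: "p \<in> Pring N" and q: "q \<in> Pring N"
  show ?thesis unfolding Pring_def mem_Collect_eq
  proof
    fix m assume "m \<in> Poly_Mapping.keys (p * q)"
    then obtain a b where "m = a + b" "a \<in> Poly_Mapping.keys p" "b \<in> Poly_Mapping.keys q"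
      using keys_mult[of p q] by blast
    then show "Poly_Mapping.keys m \<subseteq> {1..N}"
      using p q keys_add[of a b] unfolding Pring_def by blast
  qed
qed

lemma Pring_single: "Poly_Mapping.keys m \<subseteq> {1..N} \<Longrightarrow> Poly_Mapping.single m c \<in> Pring N"
  unfolding Pring_def by simp

lemma Pring_cst[simp]: "cst c \<in> Pring N"
  unfolding cst_def by (rule Pring_single) simp

lemma Pring_1[simp]: "1 \<in> Pring N"
  using Pring_cst[of 1 N] by simp

lemma Pring_tvar: "a \<in> {1..N} \<Longrightarrow> tvar a \<in> Pring N"
  unfolding tvar_def by (rule Pring_single) simp

lemma Pring_sum: "(\<And>x. x \<in> A \<Longrightarrow> f x \<in> Pring N) \<Longrightarrow> sum f A \<in> Pring N"
  by (induction A rule: infinite_finite_induct) (auto intro: Pring_add)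

lemma Pring_prod: "(\<And>x. x \<in> A \<Longrightarrow> f x \<in> Pring N) \<Longrightarrow> prod f A \<in> Pring N"
  by (induction A rule: infinite_finite_induct) (auto intro: Pring_mult)

lemma Pring_power: "p \<in> Pring N \<Longrightarrow> p ^ k \<in> Pring N"
  by (induction k) (auto intro: Pring_mult)

lemma Pring_subst: "(\<And>k. k \<in> vars p \<Longrightarrow> \<sigma> k \<in> Pring N) \<Longrightarrow> subst \<sigma> p \<in> Pring N"
  unfolding subst_def mev_def vars_def
  by (intro Pring_sum Pring_mult Pring_cst Pring_prod Pring_power) auto

lemma Pring_Pperm: "p \<in> Pring N \<Longrightarrow> \<pi> ` {1..N} \<subseteq> {1..N} \<Longrightarrow> Pperm \<pi> p \<in> Pring N"
  unfolding Pperm_def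
proof (rule Pring_subst, rule Pring_tvar)
  fix k assume "p \<in> Pring N" "\<pi> ` {1..N} \<subseteq> {1..N}" "k \<in> vars p"
  then show "\<pi> k \<in> {1..N}" unfolding Pring_iff by blast
qed

lemma Pring_quot:
  assumes f: "f \<in> Pring N" and g: "g \<in> Pring N" "g \<noteq> 0" and eq: "f = g * q"
  shows "q \<in> Pring N"
proof -
  define E where "E = (\<lambda>k. if k \<in> {1..N} then tvar k else 0)"
  have EP: "subst E q \<in> Pring N" by (rule Pring_subst) (auto simp: E_def intro: Pring_tvar)
  have idf: "subst E p = p" if "p \<in> Pring N" for p
  proof -
    have "subst E p = subst tvar p"
      by (rule subst_cong) (use that in \<open>auto simp: E_def Pring_iff\<close>)
    then show ?thesis by simp
  qed
  have "g * q = subst E f" using eq idf[OF f] by simp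
  also have "\<dots> = subst E g * subst E q" using eq by (simp add: subst_mult)
  finally have "g * q = g * subst E q" using idf[OF g(1)] by simp
  then have "q = subst E q" using g(2) by (metis mult_left_cancel)
  then show ?thesis using EP by simp
qed

lemma Pring_no0: "p \<in> Pring N \<Longrightarrow> 0 \<notin> vars p"
  by (auto simp: Pring_iff)

definition ev0 :: "mpoly \<Rightarrow> mpoly" where "ev0 p = subst (tvar(0 := 0)) p"

lemma ev0_id: "0 \<notin> vars p \<Longrightarrow> ev0 p = p"
proof -
  assume "0 \<notin> vars p"
  then have "subst (tvar(0 := 0)) p = subst tvar p" by (intro subst_cong) (metis fun_upd_other)
  then show ?thesis by (simp add: ev0_def)
qed

definition Hm :: "mpoly \<Rightarrow> mpoly" where "Hm p = subst (\<lambda>k. tvar 0 * tvar k) p"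

definition mdeg :: "(nat \<Rightarrow>\<^sub>0 nat) \<Rightarrow> nat" where
  "mdeg m = (\<Sum>k\<in>Poly_Mapping.keys m. Poly_Mapping.lookup m k)"

lemma mev_times: "mev (\<lambda>k. f k * g k) m = mev f m * mev g m"
  by (simp add: mev_def power_mult_distrib prod.distrib)

lemma mev_const: "mev (\<lambda>k. c) m = c ^ mdeg m"
  by (simp add: mev_def mdeg_def power_sum)

lemma Hm_single: "Hm (Poly_Mapping.single m c) = Poly_Mapping.single (Poly_Mapping.single 0 (mdeg m) + m) c"
proof -
  have "Hm (Poly_Mapping.single m c) = cst c * (tvar 0 ^ mdeg m * Poly_Mapping.single m 1)"
    unfolding Hm_def subst_single mev_times mev_const mev_tvar ..
  also have "\<dots> = Poly_Mapping.single (Poly_Mapping.single 0 (mdeg m) + m) c"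
    by (simp add: tvar_pow cst_def mult_single)
  finally show ?thesis .
qed

lemma Hm_expand: "Hm p = (\<Sum>m\<in>Poly_Mapping.keys p. Poly_Mapping.single (Poly_Mapping.single 0 (mdeg m) + m) (Poly_Mapping.lookup p m))"
proof -
  have "Hm p = Hm (\<Sum>m\<in>Poly_Mapping.keys p. Poly_Mapping.single m (Poly_Mapping.lookup p m))"
    using poly_expand[of p] by simp
  also have "\<dots> = (\<Sum>m\<in>Poly_Mapping.keys p. Poly_Mapping.single (Poly_Mapping.single 0 (mdeg m) + m) (Poly_Mapping.lookup p m))"
    unfolding Hm_def subst_sum by (simp add: Hm_single[unfolded Hm_def])
  finally show ?thesis .
qed

lemma t0_expand: "tvar 0 ^ d * p = (\<Sum>m\<in>Poly_Mapping.keys p. Poly_Mapping.single (Poly_Mapping.single 0 d + m) (Poly_Mapping.lookup p m))"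
proof -
  have "tvar 0 ^ d * p = tvar 0 ^ d * (\<Sum>m\<in>Poly_Mapping.keys p. Poly_Mapping.single m (Poly_Mapping.lookup p m))"
    using poly_expand[of p] by simp
  then show ?thesis by (simp add: sum_distrib_left tvar_pow mult_single)
qed

lemma lookup_sum_single: "finite K \<Longrightarrow>
  Poly_Mapping.lookup (\<Sum>m\<in>K. Poly_Mapping.single (f m) (c m)) x = (\<Sum>m\<in>{m\<in>K. f m = x}. (c m :: complex))"
  unfolding lookup_sum lookup_single when_def
  by (simp add: sum.inter_filter)

lemma homog_iff:
  assumes "0 \<notin> vars p"
  shows "homogeneous d p \<longleftrightarrow> Hm p = tvar 0 ^ d * p"
proof
  assume h: "homogeneous d p"
  show "Hm p = tvar 0 ^ d * p"
    unfolding Hm_expand t0_expand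
    by (rule sum.cong) (use h in \<open>auto simp: homogeneous_def mdeg_def\<close>)
next
  assume e: "Hm p = tvar 0 ^ d * p"
  show "homogeneous d p" unfolding homogeneous_def
  proof (rule ccontr)
    assume "\<not> (\<forall>m\<in>Poly_Mapping.keys p. (\<Sum>k\<in>Poly_Mapping.keys m. Poly_Mapping.lookup m k) = d)"
    then obtain m0 where m0: "m0 \<in> Poly_Mapping.keys p" "mdeg m0 \<noteq> d" by (auto simp: mdeg_def)
    define x where "x = Poly_Mapping.single 0 (mdeg m0) + m0"
    have m00: "Poly_Mapping.lookup m0 0 = 0" using assms m0(1) by (auto simp: vars_def in_keys_iff)
    have s1: "{m \<in> Poly_Mapping.keys p. Poly_Mapping.single 0 (mdeg m) + m = x} = {m0}"
    proof (intro equalityI subsetI)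
      fix m assume "m \<in> {m \<in> Poly_Mapping.keys p. Poly_Mapping.single 0 (mdeg m) + m = x}"
      then have mk: "m \<in> Poly_Mapping.keys p" and eq: "Poly_Mapping.single 0 (mdeg m) + m = x" by auto
      have m0': "Poly_Mapping.lookup m 0 = 0" using assms mk by (auto simp: vars_def in_keys_iff)
      have "m = m0"
      proof (rule poly_mapping_eqI)
        fix k
        have "Poly_Mapping.lookup (Poly_Mapping.single 0 (mdeg m) + m) k = Poly_Mapping.lookup x k" using eq by simp
        then show "Poly_Mapping.lookup m k = Poly_Mapping.lookup m0 k"
          using m0' m00 by (cases "k = 0") (auto simp: x_def lookup_add lookup_single when_def)
      qed
      then show "m \<in> {m0}" by simp
    qed (use m0 in \<open>auto simp: x_def\<close>)
    have s2: "{m \<in> Poly_Mapping.keys p. Poly_Mapping.single 0 d + m = x} = {}"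
    proof (intro equalityI subsetI)
      fix m assume "m \<in> {m \<in> Poly_Mapping.keys p. Poly_Mapping.single 0 d + m = x}"
      then have mk: "m \<in> Poly_Mapping.keys p" and eq: "Poly_Mapping.single 0 d + m = x" by auto
      have m0': "Poly_Mapping.lookup m 0 = 0" using assms mk by (auto simp: vars_def in_keys_iff)
      have "Poly_Mapping.lookup (Poly_Mapping.single 0 d + m) 0 = Poly_Mapping.lookup x 0" using eq by simp
      then have "d = mdeg m0" using m0' m00 by (simp add: x_def lookup_add)
      then show "m \<in> {}" using m0 by simp
    qed simp
    have "Poly_Mapping.lookup (Hm p) x = Poly_Mapping.lookup p m0"
      unfolding Hm_expand lookup_sum_single[OF finite_keys] s1 by simp
    moreover have "Poly_Mapping.lookup (tvar 0 ^ d * p) x = 0"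
      unfolding t0_expand lookup_sum_single[OF finite_keys] s2 by simp
    ultimately show False using e m0(1) by (simp add: in_keys_iff)
  qed
qed

lemma homogI: "p \<in> Pring N \<Longrightarrow> Hm p = tvar 0 ^ d * p \<Longrightarrow> homogeneous d p"
  using homog_iff Pring_no0 by blast

lemma homogD: "p \<in> Pring N \<Longrightarrow> homogeneous d p \<Longrightarrow> Hm p = tvar 0 ^ d * p"
  using homog_iff Pring_no0 by blast

lemma homog_0[simp]: "homogeneous d 0" by (simp add: homogeneous_def)

lemma homog_add: "p \<in> Pring N \<Longrightarrow> q \<in> Pring N \<Longrightarrow> homogeneous d p \<Longrightarrow> homogeneous d q \<Longrightarrow> homogeneous d (p + q)"
  by (rule homogI[OF Pring_add]) (auto simp: Hm_def subst_add homogD[unfolded Hm_def] distrib_left)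

lemma homog_uminus: "p \<in> Pring N \<Longrightarrow> homogeneous d p \<Longrightarrow> homogeneous d (- p)"
  by (rule homogI[OF Pring_uminus]) (auto simp: Hm_def subst_uminus homogD[unfolded Hm_def])

lemma homog_diff: "p \<in> Pring N \<Longrightarrow> q \<in> Pring N \<Longrightarrow> homogeneous d p \<Longrightarrow> homogeneous d q \<Longrightarrow> homogeneous d (p - q)"
  using homog_add[of p N "-q" d] homog_uminus[of q N d] Pring_uminus[of q N] by simp

lemma homog_mult:
  assumes "p \<in> Pring N" "q \<in> Pring N" "homogeneous d p" "homogeneous e q"
  shows "homogeneous (d + e) (p * q)"
proof (rule homogI[OF Pring_mult[OF assms(1,2)]])
  have "Hm (p * q) = Hm p * Hm q" by (simp add: Hm_def subst_mult)
  also have "\<dots> = (tvar 0 ^ d * p) * (tvar 0 ^ e * q)" using homogD assms by metis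
  finally show "Hm (p * q) = tvar 0 ^ (d + e) * (p * q)" by (simp add: power_add mult_ac)
qed

lemma homog_tvar: "homogeneous 1 (tvar a)"
  by (simp add: homogeneous_def tvar_def lookup_single)

lemma homog_cst: "homogeneous 0 (cst c)"
  by (cases "c = 0") (simp_all add: homogeneous_def cst_def)

lemma homog_tdiff: "a \<in> {1..N} \<Longrightarrow> b \<in> {1..N} \<Longrightarrow> homogeneous 1 (tvar a - tvar b)"
  using homog_diff[of "tvar a" N "tvar b" 1] Pring_tvar[of a N] Pring_tvar[of b N] homog_tvar[of a] homog_tvar[of b] by blast

lemma homog_prod:
  "(\<And>x. x \<in> A \<Longrightarrow> f x \<in> Pring N) \<Longrightarrow> (\<And>x. x \<in> A \<Longrightarrow> homogeneous (g x) (f x)) \<Longrightarrow> homogeneous (sum g A) (prod f A)"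
proof (induction A rule: infinite_finite_induct)
  case (infinite A)
  then show ?case using homog_cst[of 1] by simp
next
  case empty
  then show ?case using homog_cst[of 1] by simp
next
  case (insert x F)
  then show ?case by (auto intro!: homog_mult[of _ N] Pring_prod)
qed

lemma homog_Pperm:
  assumes "p \<in> Pring N" "homogeneous d p" "\<pi> 0 = 0" "\<pi> ` {1..N} \<subseteq> {1..N}"
  shows "homogeneous d (Pperm \<pi> p)"
proof (rule homogI[OF Pring_Pperm[OF assms(1,4)]])
  have "Hm (Pperm \<pi> p) = Pperm \<pi> (Hm p)"
    using assms(3) by (simp add: Hm_def Pperm_def subst_comp subst_mult)
  also have "\<dots> = tvar 0 ^ d * Pperm \<pi> p"
    using homogD[OF assms(1,2)] assms(3) by (simp only: Pperm_mult) (simp add: Pperm_def subst_power)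
  finally show "Hm (Pperm \<pi> p) = tvar 0 ^ d * Pperm \<pi> p" .
qed

lemma ev0_t0: "ev0 (tvar 0 * x) = 0"
  by (simp add: ev0_def subst_mult)

lemma homog_quot:
  assumes L: "L \<in> Pring N" "L \<noteq> 0" "homogeneous 1 L"
    and num: "num \<in> Pring N" "homogeneous d num" and eq: "num = L * q"
  shows "homogeneous (d - 1) q \<and> (d = 0 \<longrightarrow> q = 0)"
proof -
  have q: "q \<in> Pring N" using Pring_quot[OF num(1) L(1,2) eq] .
  have "Hm num = tvar 0 ^ d * num" using homogD[OF num] .
  also have "Hm num = tvar 0 * L * Hm q" using eq homogD[OF L(1,3)] by (simp add: Hm_def subst_mult)
  finally have e: "tvar 0 * L * Hm q = tvar 0 ^ d * L * q" using eq by (simp add: mult_ac)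
  show ?thesis
  proof (cases d)
    case 0
    then have "L * (tvar 0 * Hm q) = L * q" using e by (simp add: mult_ac)
    then have "tvar 0 * Hm q = q" using L(2) by simp
    then have "q = 0" using ev0_t0[of "Hm q"] ev0_id[OF Pring_no0[OF q]] by simp
    then show ?thesis by simp
  next
    case (Suc d')
    then have "(tvar 0 * L) * Hm q = (tvar 0 * L) * (tvar 0 ^ d' * q)" using e by (simp add: mult_ac)
    then have "Hm q = tvar 0 ^ d' * q" using L(2) by simp
    then show ?thesis using homogI[OF q] Suc by simp
  qed
qed

lemma homog_dvd_bound:
  assumes f: "f \<in> Pring N" "f \<noteq> 0" "homogeneous d f"
    and g: "g \<in> Pring N" "homogeneous k g" "g dvd f"
  shows "k \<le> d"
proof (rule ccontr)
  assume kd: "\<not> k \<le> d"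
  obtain q where eq: "f = g * q" using g(3) by (auto simp: dvd_def)
  have gne: "g \<noteq> 0" using eq f(2) by auto
  have q: "q \<in> Pring N" using Pring_quot[OF f(1) g(1) gne eq] .
  have "tvar 0 ^ d * f = Hm f" using homogD[OF f(1,3)] by simp
  also have "\<dots> = tvar 0 ^ k * g * Hm q" using eq homogD[OF g(1,2)] by (simp add: Hm_def subst_mult)
  finally have "g * (tvar 0 ^ d * q) = g * (tvar 0 ^ k * Hm q)"
    using eq by (simp add: mult_ac)
  then have "tvar 0 ^ d * q = tvar 0 ^ k * Hm q" using gne by simp
  moreover have "tvar 0 ^ k = tvar 0 ^ d * (tvar 0 * tvar 0 ^ (k - d - 1))"
  proof -
    have "k = d + Suc (k - d - 1)" using kd by simp
    then have "tvar 0 ^ k = tvar 0 ^ (d + Suc (k - d - 1))" by (rule arg_cong)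
    then show ?thesis by (simp only: power_add power_Suc)
  qed
  ultimately have "tvar 0 ^ d * q = tvar 0 ^ d * (tvar 0 * (tvar 0 ^ (k - d - 1) * Hm q))"
    by (simp add: mult_ac)
  then have "q = tvar 0 * (tvar 0 ^ (k - d - 1) * Hm q)" by simp
  then have "q = 0" using ev0_t0[of "tvar 0 ^ (k - d - 1) * Hm q"] ev0_id[OF Pring_no0[OF q]] by simp
  then show False using eq f(2) by simp
qed



definition PS :: "nat \<Rightarrow> (nat \<Rightarrow> nat) \<Rightarrow> nat" where "PS j \<mu> = (\<Sum>a\<in>{1..j}. \<mu> a)"

definition Iset :: "nat \<Rightarrow> (nat \<Rightarrow> nat) \<Rightarrow> (nat \<times> nat) set" where
  "Iset N \<mu> = {(a, b). a \<in> {1..N} \<and> b \<in> {1..N} \<and> a < b \<and> \<mu> a > \<mu> b}"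

definition SPS :: "nat \<Rightarrow> (nat \<Rightarrow> nat) \<Rightarrow> nat" where "SPS M \<mu> = (\<Sum>j\<in>{1..M}. PS j \<mu>)"

lemma len_Iset: "len N \<mu> = card (Iset N \<mu>)" by (simp add: len_def Iset_def)

lemma finite_Iset[simp]: "finite (Iset N \<mu>)"
  by (rule finite_subset[of _ "{1..N} \<times> {1..N}"]) (auto simp: Iset_def)

lemma dom_ge_PS: "dom_ge N \<mu> \<kappa> \<longleftrightarrow> (\<forall>j\<in>{1..N}. PS j \<mu> \<ge> PS j \<kappa>)"
  by (simp add: dom_ge_def PS_def)

lemma Lambda_le1: "\<mu> \<in> Lambda N n \<Longrightarrow> \<mu> j \<le> 1"
  by (cases "j \<in> {1..N}") (auto simp: Lambda_def)

lemma Lambda_out: "\<mu> \<in> Lambda N n \<Longrightarrow> j \<notin> {1..N} \<Longrightarrow> \<mu> j = 0"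
  by (auto simp: Lambda_def)

lemma Lambda_sum: "\<mu> \<in> Lambda N n \<Longrightarrow> PS N \<mu> = n"
  by (auto simp: Lambda_def PS_def)

lemma Lambda_finite: "finite (Lambda N n)"
proof -
  have "Lambda N n \<subseteq> (\<lambda>g x. if x \<in> {1..N} then g x else 0) ` ({1..N} \<rightarrow>\<^sub>E {0..1::nat})"
  proof
    fix \<mu> assume m: "\<mu> \<in> Lambda N n"
    show "\<mu> \<in> (\<lambda>g x. if x \<in> {1..N} then g x else 0) ` ({1..N} \<rightarrow>\<^sub>E {0..1})"
    proof (rule image_eqI[of _ _ "restrict \<mu> {1..N}"])
      show "\<mu> = (\<lambda>x. if x \<in> {1..N} then restrict \<mu> {1..N} x else 0)"
        using Lambda_out[OF m] by (auto simp: fun_eq_iff)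
      show "restrict \<mu> {1..N} \<in> {1..N} \<rightarrow>\<^sub>E {0..1}"
        using Lambda_le1[OF m] by auto
    qed
  qed
  then show ?thesis by (rule finite_subset) (auto intro!: finite_imageI finite_PiE)
qed

lemma Lambda_perm:
  assumes "\<pi> permutes {1..N}" "\<mu> \<in> Lambda N n"
  shows "\<mu> \<circ> \<pi> \<in> Lambda N n"
proof -
  have b: "bij_betw \<pi> {1..N} {1..N}" using assms(1) by (rule permutes_imp_bij)
  have "(\<Sum>j\<in>{1..N}. \<mu> (\<pi> j)) = (\<Sum>j\<in>{1..N}. \<mu> j)" by (rule sum.reindex_bij_betw[OF b])
  moreover have "\<And>j. j \<in> {1..N} \<Longrightarrow> \<pi> j \<in> {1..N}" using permutes_in_image[OF assms(1)] by blast
  moreover have "\<And>j. j \<notin> {1..N} \<Longrightarrow> \<pi> j = j" using assms(1) by (simp add: permutes_not_in)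
  ultimately show ?thesis using assms(2) unfolding Lambda_def by auto
qed

lemma transpose_permutes: "a \<in> S \<Longrightarrow> b \<in> S \<Longrightarrow> transpose a b permutes S"
  by (simp add: permutes_swap_id swap_id_eq)

lemma act_transpose: "act (transpose a b) \<mu> = \<mu> \<circ> transpose a b"
  by (simp add: act_def fun_eq_iff)

lemma act_inv: "bij w \<Longrightarrow> act (inv w) \<mu> = \<mu> \<circ> w"
  by (simp add: act_def fun_eq_iff inv_inv_eq)

lemma act_id[simp]: "act id \<mu> = \<mu>" "act (inv id) \<mu> = \<mu>"
  by (simp_all add: act_def)

lemma PS_0[simp]: "PS 0 \<mu> = 0" by (simp add: PS_def)

lemma PS_Suc: "PS (Suc j) \<mu> = PS j \<mu> + \<mu> (Suc j)"
  by (simp add: PS_def)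

lemma PS_det:
  assumes "\<mu> \<in> Lambda N n" "\<kappa> \<in> Lambda N n" "\<forall>j\<in>{1..N}. PS j \<mu> = PS j \<kappa>"
  shows "\<mu> = \<kappa>"
proof
  fix j
  show "\<mu> j = \<kappa> j"
  proof (cases "j \<in> {1..N}")
    case True
    then obtain j' where j': "j = Suc j'" by (cases j) auto
    have "PS j \<mu> = PS j \<kappa>" using assms(3) True by blast
    moreover have "PS j' \<mu> = PS j' \<kappa>"
      using assms(3) True j' by (cases j') auto
    ultimately show ?thesis using j' by (simp add: PS_Suc)
  next
    case False
    then show ?thesis using Lambda_out assms(1,2) by metis
  qed
qed

lemma dom_ge_refl: "dom_ge N \<mu> \<mu>" by (simp add: dom_ge_def)

lemma dom_ge_trans: "dom_ge N \<mu> \<kappa> \<Longrightarrow> dom_ge N \<kappa> \<nu> \<Longrightarrow> dom_ge N \<mu> \<nu>"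
  by (auto simp: dom_ge_def intro: order_trans)

lemma dom_ge_antisym:
  "\<mu> \<in> Lambda N n \<Longrightarrow> \<kappa> \<in> Lambda N n \<Longrightarrow> dom_ge N \<mu> \<kappa> \<Longrightarrow> dom_ge N \<kappa> \<mu> \<Longrightarrow> \<mu> = \<kappa>"
  by (rule PS_det) (auto simp: dom_ge_PS intro: order_antisym)

lemma sum_01:
  assumes "finite A" "\<And>a. a \<in> A \<Longrightarrow> \<mu> a \<le> (1::nat)"
  shows "sum \<mu> A = card {a\<in>A. 0 < \<mu> a}"
proof -
  have "sum \<mu> A = sum \<mu> {a\<in>A. 0 < \<mu> a}"
    by (rule sum.mono_neutral_right) (use assms in auto)
  also have "\<dots> = sum (\<lambda>_. 1) {a\<in>A. 0 < \<mu> a}"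
  proof (rule sum.cong)
    fix x assume "x \<in> {a\<in>A. 0 < \<mu> a}"
    then have "\<mu> x \<le> 1" "0 < \<mu> x" using assms(2) by auto
    then show "\<mu> x = 1" by linarith
  qed simp
  finally show ?thesis by simp
qed

lemma len_identity_gen:
  assumes "\<And>a. a \<in> {1..M} \<Longrightarrow> \<mu> a \<le> 1"
  shows "2 * card (Iset M \<mu>) + PS M \<mu> * (PS M \<mu> + 1) = 2 * SPS M \<mu>"
  using assms
proof (induction M)
  case 0
  then show ?case by (simp add: Iset_def SPS_def)
next
  case (Suc M)
  have IH: "2 * card (Iset M \<mu>) + PS M \<mu> * (PS M \<mu> + 1) = 2 * SPS M \<mu>"
    using Suc by auto
  define B where "B = (\<lambda>a. (a, Suc M)) ` {a\<in>{1..M}. \<mu> a > \<mu> (Suc M)}"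
  have split: "Iset (Suc M) \<mu> = Iset M \<mu> \<union> B"
    by (auto simp: Iset_def B_def image_iff le_Suc_eq less_Suc_eq_le)
  have disj: "Iset M \<mu> \<inter> B = {}" by (auto simp: Iset_def B_def)
  have fB: "finite B" by (simp add: B_def)
  have cB: "card B = card {a\<in>{1..M}. \<mu> a > \<mu> (Suc M)}"
    unfolding B_def by (rule card_image) (auto simp: inj_on_def)
  have le: "\<mu> (Suc M) \<le> 1" using Suc.prems by simp
  have PSM: "PS M \<mu> = card {a\<in>{1..M}. 0 < \<mu> a}"
    unfolding PS_def by (rule sum_01) (use Suc.prems in auto)
  have "card (Iset (Suc M) \<mu>) = card (Iset M \<mu>) + card B"
    unfolding split by (rule card_Un_disjoint) (auto simp: disj fB)
  moreover have "card B = (if \<mu> (Suc M) = 0 then PS M \<mu> else 0)"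
  proof (cases "\<mu> (Suc M) = 0")
    case True
    then show ?thesis using cB PSM by simp
  next
    case False
    then have "\<mu> (Suc M) = 1" using le by simp
    moreover have "\<And>a. a \<in> {1..M} \<Longrightarrow> \<mu> a \<le> 1" using Suc.prems by simp
    ultimately have "{a\<in>{1..M}. \<mu> a > \<mu> (Suc M)} = {}" by force
    then show ?thesis using cB False by simp
  qed
  moreover have "SPS (Suc M) \<mu> = SPS M \<mu> + PS (Suc M) \<mu>" by (simp add: SPS_def)
  moreover have "PS (Suc M) \<mu> = PS M \<mu> + \<mu> (Suc M)" by (simp add: PS_Suc)
  ultimately show ?case using IH le
  proof -
    assume a: "card (Iset (Suc M) \<mu>) = card (Iset M \<mu>) + card B"
      "card B = (if \<mu> (Suc M) = 0 then PS M \<mu> else 0)"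
      "SPS (Suc M) \<mu> = SPS M \<mu> + PS (Suc M) \<mu>" "PS (Suc M) \<mu> = PS M \<mu> + \<mu> (Suc M)"
    have "\<mu> (Suc M) = 0 \<or> \<mu> (Suc M) = 1" using le by auto
    then show ?thesis
    proof
      assume z: "\<mu> (Suc M) = 0"
      show ?thesis using a IH unfolding z by (simp add: algebra_simps)
    next
      assume o: "\<mu> (Suc M) = 1"
      show ?thesis using a IH unfolding o by (simp add: algebra_simps)
    qed
  qed
qed

lemma len_identity:
  "\<mu> \<in> Lambda N n \<Longrightarrow> 2 * len N \<mu> + n * (n + 1) = 2 * SPS N \<mu>"
  using len_identity_gen[of N \<mu>] Lambda_le1 Lambda_sum len_Iset by metis

lemma len_mono:
  assumes "\<mu> \<in> Lambda N n" "\<kappa> \<in> Lambda N n" "dom_ge N \<mu> \<kappa>"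
  shows "len N \<kappa> \<le> len N \<mu>" and "\<mu> \<noteq> \<kappa> \<Longrightarrow> len N \<kappa> < len N \<mu>"
proof -
  have ge: "\<forall>j\<in>{1..N}. PS j \<kappa> \<le> PS j \<mu>" using assms(3) by (simp add: dom_ge_PS)
  then have "SPS N \<kappa> \<le> SPS N \<mu>" unfolding SPS_def by (intro sum_mono) auto
  then show "len N \<kappa> \<le> len N \<mu>" using len_identity[OF assms(1)] len_identity[OF assms(2)] by linarith
  assume ne: "\<mu> \<noteq> \<kappa>"
  then obtain j where j: "j \<in> {1..N}" "PS j \<kappa> \<noteq> PS j \<mu>" using PS_det[OF assms(1,2)] by metis
  have "SPS N \<kappa> < SPS N \<mu>" unfolding SPS_def
    by (rule sum_strict_mono_ex1) (use ge j le_neq_implies_less in blast)+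
  then show "len N \<kappa> < len N \<mu>" using len_identity[OF assms(1)] len_identity[OF assms(2)] by linarith
qed

lemma len_bound: "len N \<mu> \<le> N * N"
proof -
  have "Iset N \<mu> \<subseteq> {1..N} \<times> {1..N}" by (auto simp: Iset_def)
  then have "card (Iset N \<mu>) \<le> card ({1..N} \<times> {1..N})" by (rule card_mono[rotated]) simp
  then show ?thesis by (simp add: len_Iset card_cartesian_product)
qed

lemma PS_transpose:
  assumes "1 \<le> a" "a < b"
  shows "if a \<le> j \<and> j < b then PS j (\<mu> \<circ> transpose a b) + \<mu> a = PS j \<mu> + \<mu> b
         else PS j (\<mu> \<circ> transpose a b) = PS j \<mu>"
proof -
  have r: "PS j (\<mu> \<circ> transpose a b) = sum \<mu> (transpose a b ` {1..j})"
    unfolding PS_def by (subst sum.reindex) auto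
  show ?thesis
  proof (cases "a \<le> j \<and> j < b")
    case True
    have "transpose a b ` {1..j} = insert b ({1..j} - {a})"
    proof (intro equalityI subsetI)
      fix x assume "x \<in> transpose a b ` {1..j}"
      then obtain y where "y \<in> {1..j}" "x = transpose a b y" by auto
      then show "x \<in> insert b ({1..j} - {a})" using True assms
        by (cases "y = a"; cases "y = b") auto
    next
      fix x assume x: "x \<in> insert b ({1..j} - {a})"
      show "x \<in> transpose a b ` {1..j}"
      proof (cases "x = b")
        case True
        then show ?thesis using \<open>a \<le> j \<and> j < b\<close> assms by (auto intro!: image_eqI[of _ _ a])
      next
        case False
        then show ?thesis using x True by (auto intro!: image_eqI[of _ _ x])
      qed
    qed
    moreover have "b \<notin> {1..j} - {a}" using True by auto
    moreover have "sum \<mu> ({1..j} - {a}) + \<mu> a = sum \<mu> {1..j}"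
      using True assms sum.remove[of "{1..j}" a \<mu>] by simp
    ultimately show ?thesis using True r by (simp add: PS_def)
  next
    case False
    then have "transpose a b ` {1..j} = {1..j}"
      by (intro transpose_image_eq) (use assms in auto)
    then have "PS j (\<mu> \<circ> transpose a b) = PS j \<mu>" using r by (simp add: PS_def)
    then show ?thesis using False by (simp only: if_False)
  qed
qed

lemma swap_down:
  assumes m: "\<mu> \<in> Lambda N n" and ab: "a \<in> {1..N}" "b \<in> {1..N}" "a < b" "\<mu> a > \<mu> b"
  shows "\<mu> \<circ> transpose a b \<in> Lambda N n" "dom_ge N \<mu> (\<mu> \<circ> transpose a b)"
    "\<mu> \<circ> transpose a b \<noteq> \<mu>"
proof -
  show "\<mu> \<circ> transpose a b \<in> Lambda N n"
    by (rule Lambda_perm[OF transpose_permutes m]) (use ab in auto)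
  have "\<mu> a = 1" "\<mu> b = 0" using ab Lambda_le1[OF m, of a] by auto
  then show "dom_ge N \<mu> (\<mu> \<circ> transpose a b)" unfolding dom_ge_PS
  proof (intro ballI)
    fix j assume "j \<in> {1..N}"
    have a1: "1 \<le> a" using ab by simp
    show "PS j (\<mu> \<circ> transpose a b) \<le> PS j \<mu>"
      using PS_transpose[OF a1 ab(3), of j \<mu>] \<open>\<mu> a = 1\<close> \<open>\<mu> b = 0\<close>
      by (simp split: if_splits)
  qed
  show "\<mu> \<circ> transpose a b \<noteq> \<mu>"
  proof
    assume "\<mu> \<circ> transpose a b = \<mu>"
    then have "\<mu> (transpose a b a) = \<mu> a" by (metis comp_apply)
    then show False using ab by simp
  qed
qed

lemma swap_len_less:
  assumes m: "\<mu> \<in> Lambda N n" and ab: "a \<in> {1..N}" "b \<in> {1..N}" "a < b" "\<mu> a > \<mu> b"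
  shows "len N (\<mu> \<circ> transpose a b) < len N \<mu>"
  using len_mono(2)[OF m swap_down(1,2)[OF assms]] swap_down(3)[OF assms] by metis



lemma PS_s_other:
  assumes "1 \<le> i" "j \<noteq> i"
  shows "PS j (\<mu> \<circ> transpose i (Suc i)) = PS j \<mu>"
proof -
  have "\<not> (i \<le> j \<and> j < Suc i)" using assms(2) by auto
  then show ?thesis using PS_transpose[OF assms(1), of "Suc i" j \<mu>] by simp
qed

lemma PS_s_i:
  assumes "1 \<le> i"
  shows "PS i (\<mu> \<circ> transpose i (Suc i)) + \<mu> i = PS i \<mu> + \<mu> (Suc i)"
  using PS_transpose[OF assms(1), of "Suc i" i \<mu>] by simp

lemma PS_pred: "1 \<le> i \<Longrightarrow> PS i \<mu> = PS (i - 1) \<mu> + \<mu> i"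
  using PS_Suc[of "i - 1" \<mu>] by simp

lemma PS_pred_ge: "dom_ge N \<nu> \<kappa> \<Longrightarrow> i \<le> N \<Longrightarrow> PS (i - 1) \<kappa> \<le> PS (i - 1) \<nu>"
proof (cases "i - 1 = 0")
  case False
  assume "dom_ge N \<nu> \<kappa>" "i \<le> N"
  moreover have "i - 1 \<in> {1..N}" using False \<open>i \<le> N\<close> by auto
  ultimately show ?thesis unfolding dom_ge_PS by blast
qed simp

lemma dom_s_L2:
  assumes \<nu>: "\<nu> \<in> Lambda N n" and \<kappa>: "\<kappa> \<in> Lambda N n" and i: "1 \<le> i" "Suc i \<le> N"
    and k0: "\<kappa> (Suc i) = 0" and ge: "dom_ge N \<nu> \<kappa>"
  shows "dom_ge N (\<nu> \<circ> transpose i (Suc i)) (\<kappa> \<circ> transpose i (Suc i))"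
  unfolding dom_ge_PS
proof (intro ballI)
  fix j assume j: "j \<in> {1..N}"
  show "PS j (\<kappa> \<circ> transpose i (Suc i)) \<le> PS j (\<nu> \<circ> transpose i (Suc i))"
  proof (cases "j = i")
    case False
    then show ?thesis using PS_s_other[OF i(1) False] ge j by (simp add: dom_ge_PS)
  next
    case True
    have "PS (i - 1) \<kappa> \<le> PS (i - 1) \<nu>" using PS_pred_ge[OF ge] i by simp
    moreover have "PS i (\<kappa> \<circ> transpose i (Suc i)) = PS (i - 1) \<kappa>"
      using PS_s_i[OF i(1), of \<kappa>] PS_pred[OF i(1), of \<kappa>] k0 by simp
    moreover have "PS i (\<nu> \<circ> transpose i (Suc i)) = PS (i - 1) \<nu> + \<nu> (Suc i)"
      using PS_s_i[OF i(1), of \<nu>] PS_pred[OF i(1), of \<nu>] by simp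
    ultimately show ?thesis using True by simp
  qed
qed

lemma dom_s_L1:
  assumes \<nu>: "\<nu> \<in> Lambda N n" and \<kappa>: "\<kappa> \<in> Lambda N n" and i: "1 \<le> i" "Suc i \<le> N"
    and nk: "\<not> (\<kappa> i = 1 \<and> \<kappa> (Suc i) = 0)" and ge: "dom_ge N \<nu> \<kappa>"
  shows "dom_ge N (\<nu> \<circ> transpose i (Suc i)) \<kappa>"
  unfolding dom_ge_PS
proof (intro ballI)
  fix j assume j: "j \<in> {1..N}"
  show "PS j \<kappa> \<le> PS j (\<nu> \<circ> transpose i (Suc i))"
  proof (cases "j = i")
    case False
    then show ?thesis using PS_s_other[OF i(1) False] ge j by (simp add: dom_ge_PS)
  next
    case True
    have a: "PS (i - 1) \<kappa> \<le> PS (i - 1) \<nu>" using PS_pred_ge[OF ge] i by simp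
    have b: "PS (Suc i) \<kappa> \<le> PS (Suc i) \<nu>" using ge i by (simp add: dom_ge_PS)
    have c: "PS i (\<nu> \<circ> transpose i (Suc i)) = PS (i - 1) \<nu> + \<nu> (Suc i)"
      using PS_s_i[OF i(1), of \<nu>] PS_pred[OF i(1), of \<nu>] by simp
    have d: "PS i \<kappa> = PS (i - 1) \<kappa> + \<kappa> i" using PS_pred[OF i(1)] .
    have e: "PS (Suc i) \<kappa> = PS (i - 1) \<kappa> + \<kappa> i + \<kappa> (Suc i)"
      using d PS_Suc[of i \<kappa>] by simp
    have f: "PS (Suc i) \<nu> = PS (i - 1) \<nu> + \<nu> i + \<nu> (Suc i)"
      using PS_pred[OF i(1), of \<nu>] PS_Suc[of i \<nu>] by simp
    have l: "\<nu> i \<le> 1" "\<nu> (Suc i) \<le> 1" "\<kappa> i \<le> 1" "\<kappa> (Suc i) \<le> 1"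
      using Lambda_le1 \<nu> \<kappa> by auto
    have "PS (i - 1) \<kappa> + \<kappa> i \<le> PS (i - 1) \<nu> + \<nu> (Suc i)"
    proof (cases "\<kappa> i = 0")
      case True then show ?thesis using a by simp
    next
      case False
      then have "\<kappa> i = 1" "\<kappa> (Suc i) = 1" using nk l by auto
      then show ?thesis using a b e f l by (cases "\<nu> (Suc i) = 0") auto
    qed
    then show ?thesis using True c d by simp
  qed
qed

lemma dom_s_geq:
  assumes \<kappa>: "\<kappa> \<in> Lambda N n" and i: "1 \<le> i" "Suc i \<le> N" and k: "\<kappa> i = 1" "\<kappa> (Suc i) = 0"
  shows "dom_ge N \<kappa> (\<kappa> \<circ> transpose i (Suc i))" "\<kappa> \<circ> transpose i (Suc i) \<noteq> \<kappa>"
    "\<kappa> \<circ> transpose i (Suc i) \<in> Lambda N n"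
proof -
  show "\<kappa> \<circ> transpose i (Suc i) \<in> Lambda N n"
    by (rule Lambda_perm[OF transpose_permutes \<kappa>]) (use i in auto)
  show "dom_ge N \<kappa> (\<kappa> \<circ> transpose i (Suc i))" unfolding dom_ge_PS
  proof (intro ballI)
    fix j assume "j \<in> {1..N}"
    show "PS j (\<kappa> \<circ> transpose i (Suc i)) \<le> PS j \<kappa>"
      using PS_s_other[OF i(1), of j \<kappa>] PS_s_i[OF i(1), of \<kappa>] k by (cases "j = i") auto
  qed
  show "\<kappa> \<circ> transpose i (Suc i) \<noteq> \<kappa>"
  proof
    assume "\<kappa> \<circ> transpose i (Suc i) = \<kappa>"
    then have "\<kappa> (transpose i (Suc i) i) = \<kappa> i" by (metis comp_apply)
    then show False using k by simp
  qed
qed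

lemma s_lt:
  assumes "a < b" "(a, b) \<noteq> (i, Suc i)"
  shows "transpose i (Suc i) a < transpose i (Suc i) b"
  using assms by (auto simp: transpose_def)

lemma Iset_s:
  assumes \<kappa>: "\<kappa> \<in> Lambda N n" and i: "1 \<le> i" "Suc i \<le> N" and k: "\<kappa> i = 1" "\<kappa> (Suc i) = 0"
  defines "s \<equiv> transpose i (Suc i)"
  shows "Iset N \<kappa> = insert (i, Suc i) ((\<lambda>(a, b). (s a, s b)) ` Iset N (\<kappa> \<circ> s))"
    "(i, Suc i) \<notin> (\<lambda>(a, b). (s a, s b)) ` Iset N (\<kappa> \<circ> s)"
    "inj_on (\<lambda>(a, b). (s a, s b)) A"
proof -
  have sN: "\<And>x. x \<in> {1..N} \<Longrightarrow> s x \<in> {1..N}" using i by (auto simp: s_def transpose_def)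
  have ss: "\<And>x. s (s x) = x" by (simp add: s_def)
  show "inj_on (\<lambda>(a, b). (s a, s b)) A"
    by (rule inj_onI) (auto simp: s_def transpose_eq_iff)
  show "(i, Suc i) \<notin> (\<lambda>(a, b). (s a, s b)) ` Iset N (\<kappa> \<circ> s)"
  proof
    assume "(i, Suc i) \<in> (\<lambda>(a, b). (s a, s b)) ` Iset N (\<kappa> \<circ> s)"
    then obtain a b where "(a, b) \<in> Iset N (\<kappa> \<circ> s)" "s a = i" "s b = Suc i" by auto
    then have "a = Suc i" "b = i" "a < b" by (auto simp: s_def Iset_def transpose_eq_iff)
    then show False by simp
  qed
  show "Iset N \<kappa> = insert (i, Suc i) ((\<lambda>(a, b). (s a, s b)) ` Iset N (\<kappa> \<circ> s))"
  proof (intro equalityI subsetI)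
    fix x assume x: "x \<in> Iset N \<kappa>"
    obtain a b where ab: "x = (a, b)" by force
    show "x \<in> insert (i, Suc i) ((\<lambda>(a, b). (s a, s b)) ` Iset N (\<kappa> \<circ> s))"
    proof (cases "(a, b) = (i, Suc i)")
      case True then show ?thesis using ab by simp
    next
      case False
      have m: "a \<in> {1..N}" "b \<in> {1..N}" "a < b" "\<kappa> a > \<kappa> b" using x ab by (auto simp: Iset_def)
      have "(s a, s b) \<in> Iset N (\<kappa> \<circ> s)"
        using m sN s_lt[OF m(3) False] ss by (auto simp: Iset_def s_def)
      moreover have "x = (\<lambda>(a, b). (s a, s b)) (s a, s b)" using ab ss by simp
      ultimately show ?thesis by blast
    qed
  next
    fix x assume x: "x \<in> insert (i, Suc i) ((\<lambda>(a, b). (s a, s b)) ` Iset N (\<kappa> \<circ> s))"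
    show "x \<in> Iset N \<kappa>"
    proof (cases "x = (i, Suc i)")
      case True then show ?thesis using i k by (simp add: Iset_def)
    next
      case False
      then obtain a b where ab: "(a, b) \<in> Iset N (\<kappa> \<circ> s)" "x = (s a, s b)" using x by auto
      have m: "a \<in> {1..N}" "b \<in> {1..N}" "a < b" "\<kappa> (s a) > \<kappa> (s b)" using ab by (auto simp: Iset_def)
      have ne: "(a, b) \<noteq> (i, Suc i)"
      proof
        assume "(a, b) = (i, Suc i)"
        then have "\<kappa> (s a) = 0" using k by (simp add: s_def)
        then show False using m by simp
      qed
      show ?thesis using ab m sN s_lt[OF m(3) ne] by (auto simp: Iset_def s_def)
    qed
  qed
qed

lemma len_s:
  assumes \<kappa>: "\<kappa> \<in> Lambda N n" and i: "1 \<le> i" "Suc i \<le> N" and k: "\<kappa> i = 1" "\<kappa> (Suc i) = 0"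
  shows "len N \<kappa> = Suc (len N (\<kappa> \<circ> transpose i (Suc i)))"
proof -
  note I = Iset_s[OF assms]
  show ?thesis unfolding len_Iset I(1)
    using I(2) by (simp add: card_image[OF I(3)])
qed

lemma noascent_mono:
  assumes \<mu>: "\<mu> \<in> Lambda N n" and na: "\<forall>j. 1 \<le> j \<longrightarrow> Suc j \<le> N \<longrightarrow> \<not> (\<mu> j = 0 \<and> \<mu> (Suc j) = 1)"
    and ab: "1 \<le> a" "a \<le> b" "b \<le> N"
  shows "\<mu> b \<le> \<mu> a"
  using ab(2,3)
proof (induction b rule: dec_induct)
  case base then show ?case by simp
next
  case (step m)
  have "\<mu> (Suc m) \<le> \<mu> m"
  proof (rule ccontr)
    assume "\<not> \<mu> (Suc m) \<le> \<mu> m"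
    then have "\<mu> m = 0" "\<mu> (Suc m) = 1" using Lambda_le1[OF \<mu>, of "Suc m"] by auto
    moreover have "1 \<le> m" "Suc m \<le> N" using step ab by auto
    ultimately show False using na by blast
  qed
  then show ?case using step by simp
qed



lemma dom_ge_w_iff: "v permutes {1..N} \<Longrightarrow> dom_ge_w N v \<mu> \<kappa> = dom_ge N (\<mu> \<circ> v) (\<kappa> \<circ> v)"
  by (simp add: dom_ge_w_def act_inv permutes_bij)

lemma inv_w_img:
  assumes v: "v permutes {1..N}"
  shows "inv_w N v \<kappa> = (\<lambda>(x, y). (v x, v y)) ` Iset N (\<kappa> \<circ> v)"
proof (intro equalityI subsetI)
  fix p assume p: "p \<in> inv_w N v \<kappa>"
  obtain a b where ab: "p = (a, b)" by force
  have m: "a \<in> {1..N}" "b \<in> {1..N}" "inv v a < inv v b" "\<kappa> a > \<kappa> b" using p ab by (auto simp: inv_w_def)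
  have iv: "inv v permutes {1..N}" using v by (rule permutes_inv)
  have "(inv v a, inv v b) \<in> Iset N (\<kappa> \<circ> v)"
    using m permutes_in_image[OF iv] permutes_inverses[OF v] by (auto simp: Iset_def)
  moreover have "p = (\<lambda>(x, y). (v x, v y)) (inv v a, inv v b)" using ab permutes_inverses[OF v] by simp
  ultimately show "p \<in> (\<lambda>(x, y). (v x, v y)) ` Iset N (\<kappa> \<circ> v)" by blast
next
  fix p assume "p \<in> (\<lambda>(x, y). (v x, v y)) ` Iset N (\<kappa> \<circ> v)"
  then obtain x y where xy: "(x, y) \<in> Iset N (\<kappa> \<circ> v)" "p = (v x, v y)" by auto
  then show "p \<in> inv_w N v \<kappa>"
    using permutes_in_image[OF v] permutes_inverses[OF v] by (auto simp: Iset_def inv_w_def)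
qed

lemma card_inv_w: "v permutes {1..N} \<Longrightarrow> card (inv_w N v \<kappa>) = len N (\<kappa> \<circ> v)"
  unfolding inv_w_img len_Iset
  by (rule card_image) (auto simp: inj_on_def permutes_inj[THEN injD])

lemma finite_inv_w[simp]: "finite (inv_w N v \<kappa>)"
  by (rule finite_subset[of _ "{1..N} \<times> {1..N}"]) (auto simp: inv_w_def)

lemma inv_w_mem: "(a, b) \<in> inv_w N v \<kappa> \<Longrightarrow> a \<in> {1..N} \<and> b \<in> {1..N} \<and> a \<noteq> b \<and> (b, a) \<notin> inv_w N v \<kappa> \<and> \<kappa> a > \<kappa> b"
  by (auto simp: inv_w_def)

lemma swap_v:
  assumes v: "v permutes {1..N}" and \<mu>: "\<mu> \<in> Lambda N n" and ab: "(a, b) \<in> inv_w N v \<mu>"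
  shows "\<mu> \<circ> transpose a b \<in> Lambda N n" "len N (\<mu> \<circ> transpose a b \<circ> v) < len N (\<mu> \<circ> v)"
proof -
  have m: "a \<in> {1..N}" "b \<in> {1..N}" "inv v a < inv v b" "\<mu> a > \<mu> b" using ab by (auto simp: inv_w_def)
  show "\<mu> \<circ> transpose a b \<in> Lambda N n" by (rule Lambda_perm[OF transpose_permutes \<mu>]) (use m in auto)
  have iv: "inv v permutes {1..N}" using v by (rule permutes_inv)
  have eq: "\<mu> \<circ> transpose a b \<circ> v = (\<mu> \<circ> v) \<circ> transpose (inv v a) (inv v b)"
    using transpose_comp_eq[OF permutes_bij[OF v], of a b] by (simp add: comp_assoc)
  have "len N ((\<mu> \<circ> v) \<circ> transpose (inv v a) (inv v b)) < len N (\<mu> \<circ> v)"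
    by (rule swap_len_less[OF Lambda_perm[OF v \<mu>]])
       (use m permutes_in_image[OF iv] permutes_inverses[OF v] in auto)
  then show "len N (\<mu> \<circ> transpose a b \<circ> v) < len N (\<mu> \<circ> v)" using eq by simp
qed

lemma ge_v_len:
  assumes v: "v permutes {1..N}" and \<mu>: "\<mu> \<in> Lambda N n" and \<kappa>: "\<kappa> \<in> Lambda N n"
    and ge: "dom_ge_w N v \<mu> \<kappa>"
  shows "len N (\<kappa> \<circ> v) \<le> len N (\<mu> \<circ> v)" "\<mu> \<noteq> \<kappa> \<Longrightarrow> len N (\<kappa> \<circ> v) < len N (\<mu> \<circ> v)"
proof -
  have g: "dom_ge N (\<mu> \<circ> v) (\<kappa> \<circ> v)" using ge dom_ge_w_iff[OF v] by simp
  note L = len_mono[OF Lambda_perm[OF v \<mu>] Lambda_perm[OF v \<kappa>] g]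
  show "len N (\<kappa> \<circ> v) \<le> len N (\<mu> \<circ> v)" by (rule L(1))
  assume "\<mu> \<noteq> \<kappa>"
  have "\<mu> \<circ> v \<noteq> \<kappa> \<circ> v"
  proof
    assume eq: "\<mu> \<circ> v = \<kappa> \<circ> v"
    have "\<mu> = \<kappa>"
    proof
      fix x
      have "x = v (inv v x)" using permutes_inverses(1)[OF v] by simp
      then show "\<mu> x = \<kappa> x" using fun_cong[OF eq, of "inv v x"] by simp
    qed
    then show False using \<open>\<mu> \<noteq> \<kappa>\<close> by simp
  qed
  then show "len N (\<kappa> \<circ> v) < len N (\<mu> \<circ> v)" by (rule L(2))
qed

definition Pv :: "nat \<Rightarrow> (nat \<Rightarrow> nat) \<Rightarrow> (nat \<Rightarrow> nat) \<Rightarrow> mpoly" where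
  "Pv N v \<kappa> = (\<Prod>(a, b)\<in>inv_w N v \<kappa>. tvar a - tvar b)"

lemma Pv_Pring: "Pv N v \<kappa> \<in> Pring N"
  unfolding Pv_def by (rule Pring_prod) (auto intro!: Pring_diff Pring_tvar dest: inv_w_mem)

lemma Pv_ne0: "Pv N v \<kappa> \<noteq> 0"
  unfolding Pv_def by (auto dest: inv_w_mem)

lemma Pv_homog: "v permutes {1..N} \<Longrightarrow> homogeneous (len N (\<kappa> \<circ> v)) (Pv N v \<kappa>)"
proof -
  assume v: "v permutes {1..N}"
  have "homogeneous (\<Sum>x\<in>inv_w N v \<kappa>. 1) (Pv N v \<kappa>)"
    unfolding Pv_def
  proof (rule homog_prod[of _ _ N])
    fix x assume "x \<in> inv_w N v \<kappa>"
    then obtain a b where x: "x = (a, b)" "a \<in> {1..N}" "b \<in> {1..N}"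
      using inv_w_mem by (cases x) blast
    show "(case x of (a, b) \<Rightarrow> tvar a - tvar b) \<in> Pring N"
      using x by (simp add: Pring_diff Pring_tvar)
    show "homogeneous 1 (case x of (a, b) \<Rightarrow> tvar a - tvar b)"
      using x homog_tdiff[of a N b] by simp
  qed
  then show ?thesis using card_inv_w[OF v] by simp
qed

lemma GKM_zero_out: "\<alpha> \<in> GKM N n \<Longrightarrow> \<mu> \<notin> Lambda N n \<Longrightarrow> \<alpha> \<mu> = 0"
  by (simp add: GKM_def)

lemma GKM_Pring: "\<alpha> \<in> GKM N n \<Longrightarrow> \<alpha> \<mu> \<in> Pring N"
  by (cases "\<mu> \<in> Lambda N n") (auto simp: GKM_def)

lemma GKM_dvd: "\<alpha> \<in> GKM N n \<Longrightarrow> \<mu> \<in> Lambda N n \<Longrightarrow> a \<in> {1..N} \<Longrightarrow> b \<in> {1..N} \<Longrightarrow> a \<noteq> b \<Longrightarrow>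
    (tvar a - tvar b) dvd (\<alpha> \<mu> - \<alpha> (\<mu> \<circ> transpose a b))"
  by (auto simp: GKM_def act_transpose)

lemma GKM_I:
  assumes "\<And>\<mu>. \<mu> \<notin> Lambda N n \<Longrightarrow> \<alpha> \<mu> = 0" "\<And>\<mu>. \<mu> \<in> Lambda N n \<Longrightarrow> \<alpha> \<mu> \<in> Pring N"
    "\<And>\<mu> a b. \<mu> \<in> Lambda N n \<Longrightarrow> a \<in> {1..N} \<Longrightarrow> b \<in> {1..N} \<Longrightarrow> a \<noteq> b \<Longrightarrow>
       (tvar a - tvar b) dvd (\<alpha> \<mu> - \<alpha> (\<mu> \<circ> transpose a b))"
  shows "\<alpha> \<in> GKM N n"
  using assms by (auto simp: GKM_def act_transpose)

lemma GKM_diff: "\<alpha> \<in> GKM N n \<Longrightarrow> \<beta> \<in> GKM N n \<Longrightarrow> (\<lambda>\<mu>. \<alpha> \<mu> - \<beta> \<mu>) \<in> GKM N n"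
proof (rule GKM_I)
  fix \<mu> a b assume h: "\<alpha> \<in> GKM N n" "\<beta> \<in> GKM N n" "\<mu> \<in> Lambda N n" "a \<in> {1..N}" "b \<in> {1..N}" "a \<noteq> b"
  have "(tvar a - tvar b) dvd (\<alpha> \<mu> - \<alpha> (\<mu> \<circ> transpose a b)) - (\<beta> \<mu> - \<beta> (\<mu> \<circ> transpose a b))"
    using GKM_dvd[OF h(1,3-6)] GKM_dvd[OF h(2,3-6)] by (rule dvd_diff)
  then show "(tvar a - tvar b) dvd (\<alpha> \<mu> - \<beta> \<mu>) - (\<alpha> (\<mu> \<circ> transpose a b) - \<beta> (\<mu> \<circ> transpose a b))"
    by (simp add: algebra_simps)
qed (auto simp: GKM_zero_out intro: Pring_diff GKM_Pring)

lemma GKM_smult: "\<alpha> \<in> GKM N n \<Longrightarrow> q \<in> Pring N \<Longrightarrow> (\<lambda>\<mu>. q * \<alpha> \<mu>) \<in> GKM N n"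
proof (rule GKM_I)
  fix \<mu> a b assume h: "\<alpha> \<in> GKM N n" "q \<in> Pring N" "\<mu> \<in> Lambda N n" "a \<in> {1..N}" "b \<in> {1..N}" "a \<noteq> b"
  have "(tvar a - tvar b) dvd q * (\<alpha> \<mu> - \<alpha> (\<mu> \<circ> transpose a b))"
    using GKM_dvd[OF h(1,3-6)] by (rule dvd_mult)
  then show "(tvar a - tvar b) dvd q * \<alpha> \<mu> - q * \<alpha> (\<mu> \<circ> transpose a b)"
    by (simp add: algebra_simps)
qed (auto simp: GKM_zero_out intro: Pring_mult GKM_Pring)

lemma gkm_divides:
  assumes \<alpha>: "\<alpha> \<in> GKM N n" and \<mu>: "\<mu> \<in> Lambda N n"
    and z: "\<And>a b. (a, b) \<in> inv_w N v \<mu> \<Longrightarrow> \<alpha> (\<mu> \<circ> transpose a b) = 0"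
  shows "Pv N v \<mu> dvd \<alpha> \<mu>"
  unfolding Pv_def
proof (rule prod_tdiff_dvd)
  fix a b assume ab: "(a, b) \<in> inv_w N v \<mu>"
  then show "a \<noteq> b" "(b, a) \<notin> inv_w N v \<mu>" by (auto dest: inv_w_mem)
  show "(tvar a - tvar b) dvd \<alpha> \<mu>"
    using GKM_dvd[OF \<alpha> \<mu>, of a b] inv_w_mem[OF ab] z[OF ab] by simp
qed simp

lemma vanishing:
  assumes v: "v permutes {1..N}" and \<alpha>: "\<alpha> \<in> GKM N n"
    and h: "\<And>\<mu>. \<mu> \<in> Lambda N n \<Longrightarrow> homogeneous d (\<alpha> \<mu>)"
    and l: "\<And>\<mu>. \<mu> \<in> Lambda N n \<Longrightarrow> \<alpha> \<mu> \<noteq> 0 \<Longrightarrow> d < len N (\<mu> \<circ> v)"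
  shows "\<alpha> \<mu> = 0"
proof (rule ccontr)
  assume ne: "\<alpha> \<mu> \<noteq> 0"
  then have "\<mu> \<in> Lambda N n" using GKM_zero_out[OF \<alpha>] by blast
  then obtain \<mu>0 where m0: "\<mu>0 \<in> Lambda N n \<and> \<alpha> \<mu>0 \<noteq> 0"
    and min: "\<forall>\<kappa>. \<kappa> \<in> Lambda N n \<and> \<alpha> \<kappa> \<noteq> 0 \<longrightarrow> len N (\<mu>0 \<circ> v) \<le> len N (\<kappa> \<circ> v)"
    using ex_has_least_nat[of "\<lambda>\<kappa>. \<kappa> \<in> Lambda N n \<and> \<alpha> \<kappa> \<noteq> 0" \<mu> "\<lambda>\<kappa>. len N (\<kappa> \<circ> v)"] ne by blast
  have "Pv N v \<mu>0 dvd \<alpha> \<mu>0"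
  proof (rule gkm_divides[OF \<alpha>])
    show "\<mu>0 \<in> Lambda N n" using m0 by simp
    fix a b assume ab: "(a, b) \<in> inv_w N v \<mu>0"
    note sv = swap_v[OF v _ ab]
    show "\<alpha> (\<mu>0 \<circ> transpose a b) = 0"
      using min sv m0 by force
  qed
  then have "len N (\<mu>0 \<circ> v) \<le> d"
    using homog_dvd_bound[of "\<alpha> \<mu>0" N d "Pv N v \<mu>0" "len N (\<mu>0 \<circ> v)"] m0 h GKM_Pring[OF \<alpha>]
      Pv_Pring Pv_homog[OF v] by blast
  then show False using l m0 by force
qed

lemma ts_in_Lambda: "is_twisted_schubert N n v \<theta> \<alpha> \<Longrightarrow> \<theta> \<in> Lambda N n"
  by (auto simp: is_twisted_schubert_def GKM_def)

lemma ts_uniq: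
  assumes v: "v permutes {1..N}" and A: "is_twisted_schubert N n v \<theta> \<alpha>" and B: "is_twisted_schubert N n v \<theta> \<beta>"
  shows "\<alpha> = \<beta>"
proof
  fix \<mu>
  have lam: "\<theta> \<in> Lambda N n" using ts_in_Lambda[OF A] .
  have aG: "\<alpha> \<in> GKM N n" and bG: "\<beta> \<in> GKM N n" using A B by (auto simp: is_twisted_schubert_def)
  have supA: "\<And>\<kappa>. \<kappa> \<in> Lambda N n \<Longrightarrow> \<alpha> \<kappa> \<noteq> 0 \<Longrightarrow> dom_ge_w N v \<kappa> \<theta>"
    and supB: "\<And>\<kappa>. \<kappa> \<in> Lambda N n \<Longrightarrow> \<beta> \<kappa> \<noteq> 0 \<Longrightarrow> dom_ge_w N v \<kappa> \<theta>"
    using A B by (auto simp: is_twisted_schubert_def)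
  have hA: "\<And>\<kappa>. \<kappa> \<in> Lambda N n \<Longrightarrow> homogeneous (len N (\<theta> \<circ> v)) (\<alpha> \<kappa>)"
  proof -
    fix \<kappa> assume k: "\<kappa> \<in> Lambda N n"
    show "homogeneous (len N (\<theta> \<circ> v)) (\<alpha> \<kappa>)"
    proof (cases "\<alpha> \<kappa> = 0")
      case False
      then show ?thesis using A supA[OF k] k by (auto simp: is_twisted_schubert_def act_inv permutes_bij[OF v])
    qed simp
  qed
  have hB: "\<And>\<kappa>. \<kappa> \<in> Lambda N n \<Longrightarrow> homogeneous (len N (\<theta> \<circ> v)) (\<beta> \<kappa>)"
  proof -
    fix \<kappa> assume k: "\<kappa> \<in> Lambda N n"
    show "homogeneous (len N (\<theta> \<circ> v)) (\<beta> \<kappa>)"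
    proof (cases "\<beta> \<kappa> = 0")
      case False
      then show ?thesis using B supB[OF k] k by (auto simp: is_twisted_schubert_def act_inv permutes_bij[OF v])
    qed simp
  qed
  have eql: "\<alpha> \<theta> = \<beta> \<theta>" using A B by (simp add: is_twisted_schubert_def)
  have "(\<lambda>\<kappa>. \<alpha> \<kappa> - \<beta> \<kappa>) \<mu> = 0"
  proof (rule vanishing[OF v GKM_diff[OF aG bG]])
    fix \<kappa> assume k: "\<kappa> \<in> Lambda N n"
    show "homogeneous (len N (\<theta> \<circ> v)) (\<alpha> \<kappa> - \<beta> \<kappa>)"
      by (rule homog_diff[of _ N]) (use k hA hB GKM_Pring aG bG in auto)
    assume nz: "\<alpha> \<kappa> - \<beta> \<kappa> \<noteq> 0"
    then have "\<kappa> \<noteq> \<theta>" using eql by auto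
    moreover have "dom_ge_w N v \<kappa> \<theta>" using nz supA[OF k] supB[OF k] by fastforce
    ultimately show "len N (\<theta> \<circ> v) < len N (\<kappa> \<circ> v)" using ge_v_len(2)[OF v k lam] by blast
  qed
  then show "\<alpha> \<mu> = \<beta> \<mu>" by simp
qed

lemma ts_eq:
  assumes v: "v permutes {1..N}" and A: "is_twisted_schubert N n v \<theta> \<alpha>"
  shows "twisted_schubert N n v \<theta> = \<alpha>"
  unfolding twisted_schubert_def
  using ts_uniq[OF v _ A] A by (intro the_equality) blast+



lemma ts_GKM: "is_twisted_schubert N n v \<theta> \<alpha> \<Longrightarrow> \<alpha> \<in> GKM N n"
  by (simp add: is_twisted_schubert_def)

lemma ts_supp: "is_twisted_schubert N n v \<theta> \<alpha> \<Longrightarrow> \<mu> \<in> Lambda N n \<Longrightarrow> \<alpha> \<mu> \<noteq> 0 \<Longrightarrow> dom_ge_w N v \<mu> \<theta>"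
  by (simp add: is_twisted_schubert_def)

lemma ts_val: "is_twisted_schubert N n v \<theta> \<alpha> \<Longrightarrow> \<alpha> \<theta> = Pv N v \<theta>"
  by (simp add: is_twisted_schubert_def Pv_def)

lemma ts_homog_all:
  assumes v: "v permutes {1..N}" and A: "is_twisted_schubert N n v \<theta> \<alpha>" and \<mu>: "\<mu> \<in> Lambda N n"
  shows "homogeneous (len N (\<theta> \<circ> v)) (\<alpha> \<mu>)"
proof (cases "\<alpha> \<mu> = 0")
  case False
  then show ?thesis using A ts_supp[OF A \<mu>] \<mu> by (auto simp: is_twisted_schubert_def act_inv permutes_bij[OF v])
qed simp

lemma inv_w_id: "inv_w N id \<kappa> = Iset N \<kappa>"
  by (simp add: inv_w_def Iset_def)

lemma dom_ge_w_id: "dom_ge_w N id \<mu> \<kappa> = dom_ge N \<mu> \<kappa>"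
  by (simp add: dom_ge_w_def)

lemma id_permutes: "id permutes {1..N}" by (simp add: permutes_id)

definition delta :: "nat \<Rightarrow> nat \<Rightarrow> nat \<Rightarrow> ((nat \<Rightarrow> nat) \<Rightarrow> mpoly) \<Rightarrow> (nat \<Rightarrow> nat) \<Rightarrow> mpoly" where
  "delta N n i \<alpha> \<mu> = (if \<mu> \<in> Lambda N n then
     (SOME q. \<alpha> \<mu> - Pperm (transpose i (Suc i)) (\<alpha> (\<mu> \<circ> transpose i (Suc i))) = (tvar i - tvar (Suc i)) * q)
     else 0)"

lemma Pperm_ss: "Pperm (transpose a b) (Pperm (transpose a b) p) = p"
  by (simp add: Pperm_comp)

lemma s_img: "1 \<le> i \<Longrightarrow> Suc i \<le> N \<Longrightarrow> transpose i (Suc i) ` {1..N} \<subseteq> {1..N}"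
  by (auto simp: transpose_def)

lemma s_0: "1 \<le> i \<Longrightarrow> transpose i (Suc i) 0 = 0"
  by (simp add: transpose_def)

lemma comp_ss[simp]: "\<mu> \<circ> transpose a b \<circ> transpose a b = \<mu>"
  by (simp add: comp_assoc)

locale sctx =
  fixes N n i :: nat
  assumes i1: "1 \<le> i" and iN: "Suc i \<le> N"
begin

abbreviation "s \<equiv> transpose i (Suc i)"
abbreviation "L \<equiv> tvar i - tvar (Suc i)"

lemma s_perm: "s permutes {1..N}"
  using i1 iN by (intro transpose_permutes) auto

lemma L_ne0: "L \<noteq> 0" by simp

lemma L_Pring: "L \<in> Pring N" using i1 iN by (intro Pring_diff Pring_tvar) auto

lemma L_homog: "homogeneous 1 L" using i1 iN homog_tdiff[of i N "Suc i"] by simp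

lemma Pperm_L: "Pperm s L = - L" by (simp add: Pperm_diff)

lemma delta_spec:
  assumes \<alpha>: "\<alpha> \<in> GKM N n" and \<mu>: "\<mu> \<in> Lambda N n"
  shows "\<alpha> \<mu> - Pperm s (\<alpha> (\<mu> \<circ> s)) = L * delta N n i \<alpha> \<mu>"
proof -
  have d1: "L dvd \<alpha> \<mu> - \<alpha> (\<mu> \<circ> s)" using GKM_dvd[OF \<alpha> \<mu>, of i "Suc i"] i1 iN by simp
  have d2: "L dvd \<alpha> (\<mu> \<circ> s) - Pperm s (\<alpha> (\<mu> \<circ> s))" by (rule dvd_swap)
  have "L dvd \<alpha> \<mu> - Pperm s (\<alpha> (\<mu> \<circ> s))" using dvd_add[OF d1 d2] by simp
  then have ex: "\<exists>q. \<alpha> \<mu> - Pperm s (\<alpha> (\<mu> \<circ> s)) = L * q" by (auto simp: dvd_def)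
  show ?thesis unfolding delta_def using someI_ex[OF ex] \<mu> by simp
qed

lemma delta_out: "\<mu> \<notin> Lambda N n \<Longrightarrow> delta N n i \<alpha> \<mu> = 0"
  by (simp add: delta_def)

lemma delta_s:
  assumes \<alpha>: "\<alpha> \<in> GKM N n" and \<mu>: "\<mu> \<in> Lambda N n"
  shows "delta N n i \<alpha> (\<mu> \<circ> s) = Pperm s (delta N n i \<alpha> \<mu>)"
proof -
  have \<mu>s: "\<mu> \<circ> s \<in> Lambda N n" by (rule Lambda_perm[OF s_perm \<mu>])
  have "L * delta N n i \<alpha> (\<mu> \<circ> s) = \<alpha> (\<mu> \<circ> s) - Pperm s (\<alpha> \<mu>)"
    using delta_spec[OF \<alpha> \<mu>s] by simp
  also have "\<dots> = - Pperm s (\<alpha> \<mu> - Pperm s (\<alpha> (\<mu> \<circ> s)))"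
    by (simp add: Pperm_diff Pperm_ss)
  also have "\<dots> = - Pperm s (L * delta N n i \<alpha> \<mu>)" using delta_spec[OF \<alpha> \<mu>] by simp
  also have "\<dots> = L * Pperm s (delta N n i \<alpha> \<mu>)" unfolding Pperm_mult Pperm_L by (simp add: algebra_simps)
  finally show ?thesis by simp
qed

lemma delta_Pring:
  assumes \<alpha>: "\<alpha> \<in> GKM N n"
  shows "delta N n i \<alpha> \<mu> \<in> Pring N"
proof (cases "\<mu> \<in> Lambda N n")
  case True
  have "\<alpha> \<mu> - Pperm s (\<alpha> (\<mu> \<circ> s)) \<in> Pring N"
    by (intro Pring_diff Pring_Pperm GKM_Pring[OF \<alpha>] s_img i1 iN)
  then show ?thesis using Pring_quot[OF _ L_Pring L_ne0 delta_spec[OF \<alpha> True]] by simp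
qed (simp add: delta_out)

lemma dvd_pmL:
  assumes "(a = i \<and> b = Suc i) \<or> (a = Suc i \<and> b = i)" "L dvd x"
  shows "(tvar a - tvar b) dvd x"
  using assms(1)
proof (elim disjE)
  assume "a = Suc i \<and> b = i"
  then have "tvar a - tvar b = - L" by simp
  then show ?thesis using assms(2) by (metis minus_dvd_iff)
qed (use assms(2) in simp)

lemma delta_GKM:
  assumes \<alpha>: "\<alpha> \<in> GKM N n"
  shows "delta N n i \<alpha> \<in> GKM N n"
proof (rule GKM_I)
  show "\<And>\<mu>. \<mu> \<notin> Lambda N n \<Longrightarrow> delta N n i \<alpha> \<mu> = 0" by (rule delta_out)
  show "\<And>\<mu>. \<mu> \<in> Lambda N n \<Longrightarrow> delta N n i \<alpha> \<mu> \<in> Pring N" using delta_Pring[OF \<alpha>] by blast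
  fix \<mu> a b assume \<mu>: "\<mu> \<in> Lambda N n" and ab: "a \<in> {1..N}" "b \<in> {1..N}" "a \<noteq> b"
  show "(tvar a - tvar b) dvd delta N n i \<alpha> \<mu> - delta N n i \<alpha> (\<mu> \<circ> transpose a b)"
  proof (cases "(a = i \<and> b = Suc i) \<or> (a = Suc i \<and> b = i)")
    case True
    then have t: "transpose a b = s" by (auto simp: transpose_commute)
    have "L dvd delta N n i \<alpha> \<mu> - Pperm s (delta N n i \<alpha> \<mu>)" by (rule dvd_swap)
    then show ?thesis using dvd_pmL[OF True] t delta_s[OF \<alpha> \<mu>] by simp
  next
    case False
    define \<mu>' where "\<mu>' = \<mu> \<circ> transpose a b"
    have \<mu>'L: "\<mu>' \<in> Lambda N n" unfolding \<mu>'_def by (rule Lambda_perm[OF transpose_permutes \<mu>]) (use ab in auto)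
    have \<mu>s: "\<mu> \<circ> s \<in> Lambda N n" by (rule Lambda_perm[OF s_perm \<mu>])
    have comm: "\<mu>' \<circ> s = (\<mu> \<circ> s) \<circ> transpose (s a) (s b)"
      using transpose_comp_eq[of s a b] by (simp add: \<mu>'_def comp_assoc)
    have sab: "s a \<in> {1..N}" "s b \<in> {1..N}" "s a \<noteq> s b"
      using ab s_img[OF i1 iN] by (auto simp: transpose_eq_iff image_subset_iff)
    have g1: "(tvar a - tvar b) dvd \<alpha> \<mu> - \<alpha> \<mu>'" using GKM_dvd[OF \<alpha> \<mu> ab] by (simp add: \<mu>'_def)
    have "(tvar (s a) - tvar (s b)) dvd \<alpha> (\<mu> \<circ> s) - \<alpha> (\<mu>' \<circ> s)"
      using GKM_dvd[OF \<alpha> \<mu>s sab] comm by simp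
    then have "Pperm s (tvar (s a) - tvar (s b)) dvd Pperm s (\<alpha> (\<mu> \<circ> s) - \<alpha> (\<mu>' \<circ> s))" by (rule Pperm_dvd)
    then have g2: "(tvar a - tvar b) dvd Pperm s (\<alpha> (\<mu> \<circ> s)) - Pperm s (\<alpha> (\<mu>' \<circ> s))"
      by (simp add: Pperm_diff)
    have "L * (delta N n i \<alpha> \<mu> - delta N n i \<alpha> \<mu>') =
        (\<alpha> \<mu> - \<alpha> \<mu>') - (Pperm s (\<alpha> (\<mu> \<circ> s)) - Pperm s (\<alpha> (\<mu>' \<circ> s)))"
      unfolding right_diff_distrib delta_spec[OF \<alpha> \<mu>, symmetric] delta_spec[OF \<alpha> \<mu>'L, symmetric]
      by (simp add: algebra_simps)
    then have "(tvar a - tvar b) dvd L * (delta N n i \<alpha> \<mu> - delta N n i \<alpha> \<mu>')"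
      using dvd_diff[OF g1 g2] by simp
    moreover have "\<not> (tvar a - tvar b) dvd L"
      by (rule not_dvd_tdiff) (use ab False in auto)
    ultimately show ?thesis using prime_tdiff \<mu>'_def by blast
  qed
qed

lemma delta_nz:
  assumes \<alpha>: "\<alpha> \<in> GKM N n" and nz: "delta N n i \<alpha> \<mu> \<noteq> 0"
  shows "\<mu> \<in> Lambda N n \<and> (\<alpha> \<mu> \<noteq> 0 \<or> \<alpha> (\<mu> \<circ> s) \<noteq> 0)"
proof -
  have \<mu>: "\<mu> \<in> Lambda N n" using nz delta_out by blast
  show ?thesis
  proof (rule ccontr)
    assume "\<not> ?thesis"
    then have "L * delta N n i \<alpha> \<mu> = 0" using delta_spec[OF \<alpha> \<mu>] \<mu> by simp
    then show False using nz by simp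
  qed
qed

lemma delta_homog:
  assumes \<alpha>: "\<alpha> \<in> GKM N n" and \<mu>: "\<mu> \<in> Lambda N n"
    and h1: "homogeneous d (\<alpha> \<mu>)" and h2: "homogeneous d (\<alpha> (\<mu> \<circ> s))"
  shows "homogeneous (d - 1) (delta N n i \<alpha> \<mu>) \<and> (d = 0 \<longrightarrow> delta N n i \<alpha> \<mu> = 0)"
proof (rule homog_quot[OF L_Pring L_ne0 L_homog _ _ delta_spec[OF \<alpha> \<mu>]])
  show "\<alpha> \<mu> - Pperm s (\<alpha> (\<mu> \<circ> s)) \<in> Pring N"
    by (intro Pring_diff Pring_Pperm GKM_Pring[OF \<alpha>] s_img i1 iN)
  have p1: "\<alpha> (\<mu> \<circ> s) \<in> Pring N" by (rule GKM_Pring[OF \<alpha>])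
  have p2: "Pperm s (\<alpha> (\<mu> \<circ> s)) \<in> Pring N" by (rule Pring_Pperm[OF p1 s_img[OF i1 iN]])
  have h3: "homogeneous d (Pperm s (\<alpha> (\<mu> \<circ> s)))" by (rule homog_Pperm[OF p1 h2 s_0[OF i1] s_img[OF i1 iN]])
  show "homogeneous d (\<alpha> \<mu> - Pperm s (\<alpha> (\<mu> \<circ> s)))"
    by (rule homog_diff[OF GKM_Pring[OF \<alpha>] p2 h1 h3])
qed

lemma Pperm_prod_Iset:
  assumes \<kappa>: "\<kappa> \<in> Lambda N n" and k: "\<kappa> i = 1" "\<kappa> (Suc i) = 0"
  shows "Pperm s (\<Prod>(a, b)\<in>Iset N \<kappa>. tvar a - tvar b) = - L * (\<Prod>(a, b)\<in>Iset N (\<kappa> \<circ> s). tvar a - tvar b)"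
proof -
  note I = Iset_s[OF \<kappa> i1 iN k]
  have "Pperm s (\<Prod>(a, b)\<in>Iset N \<kappa>. tvar a - tvar b) = (\<Prod>(a, b)\<in>Iset N \<kappa>. tvar (s a) - tvar (s b))"
    by (simp add: Pperm_prod case_prod_beta Pperm_diff)
  also have "\<dots> = (tvar (s i) - tvar (s (Suc i))) *
      (\<Prod>(a, b)\<in>(\<lambda>(a, b). (s a, s b)) ` Iset N (\<kappa> \<circ> s). tvar (s a) - tvar (s b))"
    unfolding I(1) using I(2) by (simp add: prod.insert)
  also have "(\<Prod>(a, b)\<in>(\<lambda>(a, b). (s a, s b)) ` Iset N (\<kappa> \<circ> s). tvar (s a) - tvar (s b)) =
      (\<Prod>(a, b)\<in>Iset N (\<kappa> \<circ> s). tvar a - tvar b)"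
    by (subst prod.reindex[OF I(3)]) (simp add: case_prod_beta)
  finally show ?thesis by simp
qed

lemma delta_class:
  assumes \<kappa>: "\<kappa> \<in> Lambda N n" and k: "\<kappa> i = 1" "\<kappa> (Suc i) = 0"
    and A: "is_twisted_schubert N n id \<kappa> \<alpha>"
  shows "is_twisted_schubert N n id (\<kappa> \<circ> s) (delta N n i \<alpha>)"
proof -
  have \<alpha>: "\<alpha> \<in> GKM N n" using ts_GKM[OF A] .
  note G = dom_s_geq[OF \<kappa> i1 iN k]
  have \<kappa>s: "\<kappa> \<circ> s \<in> Lambda N n" using G(3) .
  have a0: "\<alpha> (\<kappa> \<circ> s) = 0"
  proof (rule ccontr)
    assume "\<alpha> (\<kappa> \<circ> s) \<noteq> 0"
    then have "dom_ge N (\<kappa> \<circ> s) \<kappa>" using ts_supp[OF A \<kappa>s] dom_ge_w_id by simp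
    then have "\<kappa> \<circ> s = \<kappa>" using dom_ge_antisym[OF \<kappa>s \<kappa> _ G(1)] by simp
    then show False using G(2) by simp
  qed
  have "L * delta N n i \<alpha> (\<kappa> \<circ> s) = - Pperm s (\<alpha> \<kappa>)"
    using delta_spec[OF \<alpha> \<kappa>s] a0 by simp
  also have "\<dots> = L * (\<Prod>(a, b)\<in>Iset N (\<kappa> \<circ> s). tvar a - tvar b)"
    using ts_val[OF A] Pperm_prod_Iset[OF \<kappa> k] by (simp add: Pv_def inv_w_id) (simp add: algebra_simps)
  finally have val: "delta N n i \<alpha> (\<kappa> \<circ> s) = (\<Prod>(a, b)\<in>inv_w N id (\<kappa> \<circ> s). tvar a - tvar b)"
    by (simp add: inv_w_id)
  have hom: "\<And>\<mu>. \<mu> \<in> Lambda N n \<Longrightarrow> homogeneous (len N (\<kappa> \<circ> s)) (delta N n i \<alpha> \<mu>)"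
  proof -
    fix \<mu> assume \<mu>: "\<mu> \<in> Lambda N n"
    have "homogeneous (len N \<kappa> - 1) (delta N n i \<alpha> \<mu>)"
      using delta_homog[OF \<alpha> \<mu> ts_homog_all[OF id_permutes A \<mu>] ts_homog_all[OF id_permutes A Lambda_perm[OF s_perm \<mu>]]]
      by simp
    then show "homogeneous (len N (\<kappa> \<circ> s)) (delta N n i \<alpha> \<mu>)" using len_s[OF \<kappa> i1 iN k] by simp
  qed
  show ?thesis unfolding is_twisted_schubert_def
  proof (intro conjI ballI impI)
    show "delta N n i \<alpha> \<in> GKM N n" by (rule delta_GKM[OF \<alpha>])
    show "delta N n i \<alpha> (\<kappa> \<circ> s) = (\<Prod>(a, b)\<in>inv_w N id (\<kappa> \<circ> s). tvar a - tvar b)" by (rule val)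
    then show "delta N n i \<alpha> (\<kappa> \<circ> s) \<noteq> 0" using Pv_ne0[unfolded Pv_def] by simp
    fix \<mu> assume \<mu>: "\<mu> \<in> Lambda N n"
    show "homogeneous (len N (act (inv id) (\<kappa> \<circ> s))) (delta N n i \<alpha> \<mu>)" using hom[OF \<mu>] by simp
    assume nz: "delta N n i \<alpha> \<mu> \<noteq> 0"
    then have "\<alpha> \<mu> \<noteq> 0 \<or> \<alpha> (\<mu> \<circ> s) \<noteq> 0" using delta_nz[OF \<alpha>] by blast
    then show "dom_ge_w N id \<mu> (\<kappa> \<circ> s)"
    proof
      assume "\<alpha> \<mu> \<noteq> 0"
      then have "dom_ge N \<mu> \<kappa>" using ts_supp[OF A \<mu>] dom_ge_w_id by simp
      then show ?thesis using dom_ge_trans[OF _ G(1)] dom_ge_w_id by simp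
    next
      assume "\<alpha> (\<mu> \<circ> s) \<noteq> 0"
      then have "dom_ge N (\<mu> \<circ> s) \<kappa>" using ts_supp[OF A Lambda_perm[OF s_perm \<mu>]] dom_ge_w_id by simp
      then have "dom_ge N (\<mu> \<circ> s \<circ> s) (\<kappa> \<circ> s)"
        by (rule dom_s_L2[OF Lambda_perm[OF s_perm \<mu>] \<kappa> i1 iN k(2)])
      then show ?thesis using dom_ge_w_id by simp
    qed
  qed
qed

lemma delta_zero:
  assumes \<kappa>: "\<kappa> \<in> Lambda N n" and k: "\<not> (\<kappa> i = 1 \<and> \<kappa> (Suc i) = 0)"
    and A: "is_twisted_schubert N n id \<kappa> \<alpha>"
  shows "delta N n i \<alpha> \<mu> = 0"
proof -
  have \<alpha>: "\<alpha> \<in> GKM N n" using ts_GKM[OF A] .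
  have supp: "\<And>\<nu>. delta N n i \<alpha> \<nu> \<noteq> 0 \<Longrightarrow> \<nu> \<in> Lambda N n \<and> dom_ge N \<nu> \<kappa>"
  proof -
    fix \<nu> assume nz: "delta N n i \<alpha> \<nu> \<noteq> 0"
    have \<nu>: "\<nu> \<in> Lambda N n" and o: "\<alpha> \<nu> \<noteq> 0 \<or> \<alpha> (\<nu> \<circ> s) \<noteq> 0" using delta_nz[OF \<alpha> nz] by auto
    from o have "dom_ge N \<nu> \<kappa>"
    proof
      assume "\<alpha> \<nu> \<noteq> 0" then show ?thesis using ts_supp[OF A \<nu>] dom_ge_w_id by simp
    next
      assume "\<alpha> (\<nu> \<circ> s) \<noteq> 0"
      then have "dom_ge N (\<nu> \<circ> s) \<kappa>" using ts_supp[OF A Lambda_perm[OF s_perm \<nu>]] dom_ge_w_id by simp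
      then have "dom_ge N (\<nu> \<circ> s \<circ> s) \<kappa>" by (rule dom_s_L1[OF Lambda_perm[OF s_perm \<nu>] \<kappa> i1 iN k])
      then show ?thesis by simp
    qed
    then show "\<nu> \<in> Lambda N n \<and> dom_ge N \<nu> \<kappa>" using \<nu> by simp
  qed
  have hd: "\<And>\<nu>. \<nu> \<in> Lambda N n \<Longrightarrow> homogeneous (len N \<kappa> - 1) (delta N n i \<alpha> \<nu>) \<and> (len N \<kappa> = 0 \<longrightarrow> delta N n i \<alpha> \<nu> = 0)"
    using delta_homog[OF \<alpha> _ ts_homog_all[OF id_permutes A] ts_homog_all[OF id_permutes A Lambda_perm[OF s_perm]]]
    by simp
  show ?thesis
  proof (cases "len N \<kappa> = 0")
    case True
    then show ?thesis using hd supp by blast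
  next
    case False
    show ?thesis
    proof (rule vanishing[OF id_permutes delta_GKM[OF \<alpha>]])
      show "\<And>\<nu>. \<nu> \<in> Lambda N n \<Longrightarrow> homogeneous (len N \<kappa> - 1) (delta N n i \<alpha> \<nu>)" using hd by blast
      fix \<nu> assume "\<nu> \<in> Lambda N n" "delta N n i \<alpha> \<nu> \<noteq> 0"
      then have "dom_ge N \<nu> \<kappa>" using supp by blast
      then have "len N \<kappa> \<le> len N \<nu>" using len_mono(1)[OF \<open>\<nu> \<in> Lambda N n\<close> \<kappa>] by blast
      then show "len N \<kappa> - 1 < len N (\<nu> \<circ> id)" using False by simp
    qed
  qed
qed

end



lemma comp_transpose_eq:
  assumes "\<mu> \<circ> transpose a b \<noteq> \<mu>" shows "\<mu> a \<noteq> \<mu> b"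
proof
  assume e: "\<mu> a = \<mu> b"
  have "\<mu> \<circ> transpose a b = \<mu>"
  proof
    fix x show "(\<mu> \<circ> transpose a b) x = \<mu> x" using e by (simp add: transpose_def)
  qed
  then show False using assms by simp
qed

lemma pointclass:
  assumes \<mu>: "\<mu> \<in> Lambda N n"
    and na: "\<forall>j. 1 \<le> j \<longrightarrow> Suc j \<le> N \<longrightarrow> \<not> (\<mu> j = 0 \<and> \<mu> (Suc j) = 1)"
  shows "is_twisted_schubert N n id \<mu> (\<lambda>\<kappa>. if \<kappa> = \<mu> then Pv N id \<mu> else 0)"
proof -
  define \<beta> where "\<beta> = (\<lambda>\<kappa>. if \<kappa> = \<mu> then Pv N id \<mu> else 0)"
  have key: "(tvar a - tvar b) dvd Pv N id \<mu>"
    if ab: "a \<in> {1..N}" "b \<in> {1..N}" "a \<noteq> b" and ne: "\<mu> \<circ> transpose a b \<noteq> \<mu>" for a b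
  proof -
    have d: "\<mu> a \<noteq> \<mu> b" using comp_transpose_eq[OF ne] .
    show ?thesis
    proof (cases "a < b")
      case True
      have "\<mu> b \<le> \<mu> a" using noascent_mono[OF \<mu> na, of a b] ab True by auto
      then have "(a, b) \<in> inv_w N id \<mu>" using d ab True by (auto simp: inv_w_id Iset_def)
      then show ?thesis unfolding Pv_def using dvd_prodI[of "inv_w N id \<mu>" "(a, b)" "\<lambda>(a, b). tvar a - tvar b"] by simp
    next
      case False
      then have ba: "b < a" using ab by simp
      have "\<mu> a \<le> \<mu> b" using noascent_mono[OF \<mu> na, of b a] ab ba by auto
      then have "(b, a) \<in> inv_w N id \<mu>" using d ab ba by (auto simp: inv_w_id Iset_def)
      then have "(tvar b - tvar a) dvd Pv N id \<mu>"
        unfolding Pv_def using dvd_prodI[of "inv_w N id \<mu>" "(b, a)" "\<lambda>(a, b). tvar a - tvar b"] by simp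
      then show ?thesis by (metis minus_diff_eq minus_dvd_iff)
    qed
  qed
  have G: "\<beta> \<in> GKM N n"
  proof (rule GKM_I)
    show "\<And>\<kappa>. \<kappa> \<notin> Lambda N n \<Longrightarrow> \<beta> \<kappa> = 0" using \<mu> by (auto simp: \<beta>_def)
    show "\<And>\<kappa>. \<kappa> \<in> Lambda N n \<Longrightarrow> \<beta> \<kappa> \<in> Pring N" by (simp add: \<beta>_def Pv_Pring)
    fix \<kappa> a b assume \<kappa>: "\<kappa> \<in> Lambda N n" and ab: "a \<in> {1..N}" "b \<in> {1..N}" "a \<noteq> b"
    show "(tvar a - tvar b) dvd \<beta> \<kappa> - \<beta> (\<kappa> \<circ> transpose a b)"
    proof (cases "\<kappa> = \<mu>")
      case True
      then show ?thesis using key[OF ab] by (cases "\<mu> \<circ> transpose a b = \<mu>") (auto simp: \<beta>_def)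
    next
      case False
      show ?thesis
      proof (cases "\<kappa> \<circ> transpose a b = \<mu>")
        case True
        then have "\<kappa> = \<mu> \<circ> transpose a b" by (metis comp_ss)
        then have "\<mu> \<circ> transpose a b \<noteq> \<mu>" using False by simp
        then show ?thesis using key[OF ab] True False by (simp add: \<beta>_def)
      next
        assume "\<kappa> \<circ> transpose a b \<noteq> \<mu>"
        then show ?thesis using False by (simp add: \<beta>_def)
      qed
    qed
  qed
  show ?thesis unfolding \<beta>_def[symmetric] is_twisted_schubert_def
  proof (intro conjI ballI impI)
    show "\<beta> \<in> GKM N n" by (rule G)
    show "\<beta> \<mu> \<noteq> 0" by (simp add: \<beta>_def Pv_ne0)
    show "\<beta> \<mu> = (\<Prod>(a, b)\<in>inv_w N id \<mu>. tvar a - tvar b)" by (simp add: \<beta>_def Pv_def)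
    fix \<kappa> assume "\<kappa> \<in> Lambda N n"
    show "homogeneous (len N (act (inv id) \<mu>)) (\<beta> \<kappa>)"
      using Pv_homog[OF id_permutes, of N \<mu>] by (simp add: \<beta>_def)
    show "\<beta> \<kappa> \<noteq> 0 \<Longrightarrow> dom_ge_w N id \<kappa> \<mu>"
      by (auto simp: \<beta>_def dom_ge_w_id dom_ge_refl split: if_splits)
  qed
qed

lemma exists_id:
  assumes "\<mu> \<in> Lambda N n"
  shows "\<exists>\<alpha>. is_twisted_schubert N n id \<mu> \<alpha>"
  using assms
proof (induction "N * N - len N \<mu>" arbitrary: \<mu> rule: less_induct)
  case less
  show ?case
  proof (cases "\<exists>j. 1 \<le> j \<and> Suc j \<le> N \<and> \<mu> j = 0 \<and> \<mu> (Suc j) = 1")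
    case True
    then obtain j where j: "1 \<le> j" "Suc j \<le> N" "\<mu> j = 0" "\<mu> (Suc j) = 1" by blast
    interpret S: sctx N n j using j by unfold_locales auto
    define \<kappa> where "\<kappa> = \<mu> \<circ> transpose j (Suc j)"
    have \<kappa>: "\<kappa> \<in> Lambda N n" unfolding \<kappa>_def by (rule Lambda_perm[OF S.s_perm less.prems])
    have k: "\<kappa> j = 1" "\<kappa> (Suc j) = 0" using j by (auto simp: \<kappa>_def)
    have kback: "\<kappa> \<circ> transpose j (Suc j) = \<mu>" by (simp add: \<kappa>_def)
    have "len N \<kappa> = Suc (len N \<mu>)" using len_s[OF \<kappa> j(1,2) k] kback by simp
    moreover have "len N \<kappa> \<le> N * N" by (rule len_bound)
    ultimately have "N * N - len N \<kappa> < N * N - len N \<mu>" by simp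
    then obtain \<alpha> where "is_twisted_schubert N n id \<kappa> \<alpha>" using less.hyps \<kappa> by blast
    then have "is_twisted_schubert N n id (\<kappa> \<circ> transpose j (Suc j)) (delta N n j \<alpha>)"
      by (rule S.delta_class[OF \<kappa> k])
    then show ?thesis using kback by auto
  next
    case False
    then have "\<forall>j. 1 \<le> j \<longrightarrow> Suc j \<le> N \<longrightarrow> \<not> (\<mu> j = 0 \<and> \<mu> (Suc j) = 1)" by blast
    then show ?thesis using pointclass[OF less.prems] by blast
  qed
qed

definition conjc :: "nat \<Rightarrow> nat \<Rightarrow> (nat \<Rightarrow> nat) \<Rightarrow> ((nat \<Rightarrow> nat) \<Rightarrow> mpoly) \<Rightarrow> (nat \<Rightarrow> nat) \<Rightarrow> mpoly" where
  "conjc N n v \<beta> \<mu> = (if \<mu> \<in> Lambda N n then Pperm v (\<beta> (\<mu> \<circ> v)) else 0)"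

lemma conj_class:
  assumes v: "v permutes {1..N}" and \<theta>: "\<theta> \<in> Lambda N n"
    and B: "is_twisted_schubert N n id (\<theta> \<circ> v) \<beta>"
  shows "is_twisted_schubert N n v \<theta> (conjc N n v \<beta>)"
proof -
  have \<beta>: "\<beta> \<in> GKM N n" using ts_GKM[OF B] .
  have vimg: "v ` {1..N} \<subseteq> {1..N}" using permutes_image[OF v] by simp
  have v0: "v 0 = 0" using permutes_not_in[OF v] by simp
  have iv: "inv v permutes {1..N}" using v by (rule permutes_inv)
  have G: "conjc N n v \<beta> \<in> GKM N n"
  proof (rule GKM_I)
    show "\<And>\<mu>. \<mu> \<notin> Lambda N n \<Longrightarrow> conjc N n v \<beta> \<mu> = 0" by (simp add: conjc_def)
    show "\<And>\<mu>. \<mu> \<in> Lambda N n \<Longrightarrow> conjc N n v \<beta> \<mu> \<in> Pring N"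
      by (simp add: conjc_def Pring_Pperm[OF GKM_Pring[OF \<beta>] vimg])
    fix \<mu> a b assume \<mu>: "\<mu> \<in> Lambda N n" and ab: "a \<in> {1..N}" "b \<in> {1..N}" "a \<noteq> b"
    have \<mu>t: "\<mu> \<circ> transpose a b \<in> Lambda N n" by (rule Lambda_perm[OF transpose_permutes \<mu>]) (use ab in auto)
    have eq: "\<mu> \<circ> transpose a b \<circ> v = (\<mu> \<circ> v) \<circ> transpose (inv v a) (inv v b)"
      using transpose_comp_eq[OF permutes_bij[OF v], of a b] by (simp add: comp_assoc)
    have ab': "inv v a \<in> {1..N}" "inv v b \<in> {1..N}" "inv v a \<noteq> inv v b"
      using ab permutes_in_image[OF iv] permutes_inverses[OF v] by (auto, metis)
    have "(tvar (inv v a) - tvar (inv v b)) dvd \<beta> (\<mu> \<circ> v) - \<beta> (\<mu> \<circ> transpose a b \<circ> v)"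
      using GKM_dvd[OF \<beta> Lambda_perm[OF v \<mu>] ab'] eq by simp
    then have "Pperm v (tvar (inv v a) - tvar (inv v b)) dvd Pperm v (\<beta> (\<mu> \<circ> v) - \<beta> (\<mu> \<circ> transpose a b \<circ> v))"
      by (rule Pperm_dvd)
    then show "(tvar a - tvar b) dvd conjc N n v \<beta> \<mu> - conjc N n v \<beta> (\<mu> \<circ> transpose a b)"
      using \<mu> \<mu>t permutes_inverses(1)[OF v] by (simp add: conjc_def Pperm_diff)
  qed
  have val: "conjc N n v \<beta> \<theta> = (\<Prod>(a, b)\<in>inv_w N v \<theta>. tvar a - tvar b)"
  proof -
    have "conjc N n v \<beta> \<theta> = Pperm v (\<Prod>(a, b)\<in>Iset N (\<theta> \<circ> v). tvar a - tvar b)"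
      using ts_val[OF B] \<theta> by (simp add: conjc_def Pv_def inv_w_id)
    also have "\<dots> = (\<Prod>(a, b)\<in>Iset N (\<theta> \<circ> v). tvar (v a) - tvar (v b))"
      by (simp add: Pperm_prod case_prod_beta Pperm_diff)
    also have "\<dots> = (\<Prod>(a, b)\<in>inv_w N v \<theta>. tvar a - tvar b)"
      unfolding inv_w_img[OF v]
      by (subst prod.reindex) (auto simp: inj_on_def permutes_inj[OF v, THEN injD] case_prod_beta)
    finally show ?thesis .
  qed
  show ?thesis unfolding is_twisted_schubert_def
  proof (intro conjI ballI impI)
    show "conjc N n v \<beta> \<in> GKM N n" by (rule G)
    show "conjc N n v \<beta> \<theta> = (\<Prod>(a, b)\<in>inv_w N v \<theta>. tvar a - tvar b)" by (rule val)
    then show "conjc N n v \<beta> \<theta> \<noteq> 0" using Pv_ne0[unfolded Pv_def] by simp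
    fix \<mu> assume \<mu>: "\<mu> \<in> Lambda N n"
    show "homogeneous (len N (act (inv v) \<theta>)) (conjc N n v \<beta> \<mu>)"
      using homog_Pperm[OF GKM_Pring[OF \<beta>] ts_homog_all[OF id_permutes B Lambda_perm[OF v \<mu>]] v0 vimg] \<mu>
      by (simp add: conjc_def act_inv permutes_bij[OF v])
    assume "conjc N n v \<beta> \<mu> \<noteq> 0"
    then have "\<beta> (\<mu> \<circ> v) \<noteq> 0" using \<mu> by (auto simp: conjc_def)
    then have "dom_ge N (\<mu> \<circ> v) (\<theta> \<circ> v)" using ts_supp[OF B Lambda_perm[OF v \<mu>]] dom_ge_w_id by simp
    then show "dom_ge_w N v \<mu> \<theta>" using dom_ge_w_iff[OF v] by simp
  qed
qed

lemma ts_is: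
  assumes v: "v permutes {1..N}" and \<theta>: "\<theta> \<in> Lambda N n"
  shows "is_twisted_schubert N n v \<theta> (twisted_schubert N n v \<theta>)"
    "twisted_schubert N n v \<theta> = conjc N n v (twisted_schubert N n id (\<theta> \<circ> v))"
proof -
  obtain \<beta> where B: "is_twisted_schubert N n id (\<theta> \<circ> v) \<beta>" using exists_id[OF Lambda_perm[OF v \<theta>]] by blast
  have tb: "twisted_schubert N n id (\<theta> \<circ> v) = \<beta>" by (rule ts_eq[OF id_permutes B])
  have C: "is_twisted_schubert N n v \<theta> (conjc N n v \<beta>)" by (rule conj_class[OF v \<theta> B])
  show "twisted_schubert N n v \<theta> = conjc N n v (twisted_schubert N n id (\<theta> \<circ> v))"
    using ts_eq[OF v C] tb by simp
  show "is_twisted_schubert N n v \<theta> (twisted_schubert N n v \<theta>)"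
    using ts_eq[OF v C] C by simp
qed



definition upc :: "nat \<Rightarrow> nat \<Rightarrow> (nat \<Rightarrow> nat) \<Rightarrow> (nat \<Rightarrow> nat) set \<Rightarrow> bool" where
  "upc N n v U \<longleftrightarrow> U \<subseteq> Lambda N n \<and> (\<forall>\<kappa>\<in>U. \<forall>\<kappa>'\<in>Lambda N n. dom_ge_w N v \<kappa>' \<kappa> \<longrightarrow> \<kappa>' \<in> U)"

lemma basis_exists_gen:
  assumes v: "v permutes {1..N}"
  shows "upc N n v U \<Longrightarrow> \<alpha> \<in> GKM N n \<Longrightarrow> (\<forall>\<mu>. \<alpha> \<mu> \<noteq> 0 \<longrightarrow> \<mu> \<in> U) \<Longrightarrow>
    \<exists>c. (\<forall>\<theta>\<in>Lambda N n. c \<theta> \<in> Pring N) \<and> (\<forall>\<theta>. \<theta> \<notin> Lambda N n \<longrightarrow> c \<theta> = 0)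
        \<and> (\<forall>\<mu>. \<alpha> \<mu> = (\<Sum>\<theta>\<in>Lambda N n. c \<theta> * twisted_schubert N n v \<theta> \<mu>))"
proof (induction "card U" arbitrary: U \<alpha> rule: less_induct)
  case less
  note U = less.prems(1) and \<alpha> = less.prems(2) and supp = less.prems(3)
  have UL: "U \<subseteq> Lambda N n" using U by (simp add: upc_def)
  have fU: "finite U" using finite_subset[OF UL Lambda_finite] .
  show ?case
  proof (cases "U = {}")
    case True
    then have "\<forall>\<mu>. \<alpha> \<mu> = 0" using supp by blast
    then show ?thesis by (intro exI[of _ "\<lambda>_. 0"]) simp
  next
    case False
    then obtain \<mu>1 where "\<mu>1 \<in> U" by blast
    then obtain \<mu> where \<mu>U: "\<mu> \<in> U" and min: "\<forall>\<kappa>. \<kappa> \<in> U \<longrightarrow> len N (\<mu> \<circ> v) \<le> len N (\<kappa> \<circ> v)"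
      using ex_has_least_nat[of "\<lambda>\<kappa>. \<kappa> \<in> U" \<mu>1 "\<lambda>\<kappa>. len N (\<kappa> \<circ> v)"] by blast
    have \<mu>: "\<mu> \<in> Lambda N n" using \<mu>U UL by blast
    define S where "S = twisted_schubert N n v \<mu>"
    have SC: "is_twisted_schubert N n v \<mu> S" unfolding S_def by (rule ts_is(1)[OF v \<mu>])
    have dv: "Pv N v \<mu> dvd \<alpha> \<mu>"
    proof (rule gkm_divides[OF \<alpha> \<mu>])
      fix a b assume ab: "(a, b) \<in> inv_w N v \<mu>"
      note sv = swap_v[OF v \<mu> ab]
      show "\<alpha> (\<mu> \<circ> transpose a b) = 0"
        using min sv supp by force
    qed
    then obtain q where q: "\<alpha> \<mu> = Pv N v \<mu> * q" by (auto simp: dvd_def)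
    have qP: "q \<in> Pring N" by (rule Pring_quot[OF GKM_Pring[OF \<alpha>] Pv_Pring Pv_ne0 q])
    define \<alpha>' where "\<alpha>' = (\<lambda>\<kappa>. \<alpha> \<kappa> - q * S \<kappa>)"
    have \<alpha>': "\<alpha>' \<in> GKM N n" unfolding \<alpha>'_def by (rule GKM_diff[OF \<alpha> GKM_smult[OF ts_GKM[OF SC] qP]])
    define U' where "U' = U - {\<mu>}"
    have U': "upc N n v U'"
      unfolding upc_def
    proof (intro conjI ballI impI)
      show "U' \<subseteq> Lambda N n" using UL by (auto simp: U'_def)
      fix \<kappa> \<kappa>' assume k: "\<kappa> \<in> U'" "\<kappa>' \<in> Lambda N n" "dom_ge_w N v \<kappa>' \<kappa>"
      have "\<kappa>' \<in> U" using U k by (auto simp: upc_def U'_def)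
      moreover have "\<kappa>' \<noteq> \<mu>"
      proof
        assume "\<kappa>' = \<mu>"
        then have "len N (\<kappa> \<circ> v) < len N (\<mu> \<circ> v)"
          using ge_v_len(2)[OF v \<mu>, of \<kappa>] k UL by (auto simp: U'_def)
        then show False using min k by (auto simp: U'_def)
      qed
      ultimately show "\<kappa>' \<in> U'" by (simp add: U'_def)
    qed
    have supp': "\<forall>\<kappa>. \<alpha>' \<kappa> \<noteq> 0 \<longrightarrow> \<kappa> \<in> U'"
    proof (intro allI impI)
      fix \<kappa> assume nz: "\<alpha>' \<kappa> \<noteq> 0"
      have "\<kappa> \<noteq> \<mu>" using nz q ts_val[OF SC] by (auto simp: \<alpha>'_def mult.commute)
      moreover have "\<kappa> \<in> U"
      proof (cases "\<alpha> \<kappa> = 0")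
        case True
        then have Sk: "S \<kappa> \<noteq> 0" using nz by (auto simp: \<alpha>'_def)
        then have \<kappa>L: "\<kappa> \<in> Lambda N n" using GKM_zero_out[OF ts_GKM[OF SC]] by blast
        have "dom_ge_w N v \<kappa> \<mu>" using ts_supp[OF SC \<kappa>L Sk] .
        then show ?thesis using U \<mu>U \<kappa>L by (auto simp: upc_def)
      qed (use supp in blast)
      ultimately show "\<kappa> \<in> U'" by (simp add: U'_def)
    qed
    have "card U' < card U" unfolding U'_def by (rule card_Diff1_less[OF fU \<mu>U])
    then obtain c' where c': "\<forall>\<theta>\<in>Lambda N n. c' \<theta> \<in> Pring N" "\<forall>\<theta>. \<theta> \<notin> Lambda N n \<longrightarrow> c' \<theta> = 0"
      "\<forall>\<kappa>. \<alpha>' \<kappa> = (\<Sum>\<theta>\<in>Lambda N n. c' \<theta> * twisted_schubert N n v \<theta> \<kappa>)"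
      using less.hyps[OF _ U' \<alpha>' supp'] by blast
    define c where "c = c'(\<mu> := c' \<mu> + q)"
    show ?thesis
    proof (intro exI[of _ c] conjI allI ballI impI)
      fix \<theta> assume "\<theta> \<in> Lambda N n"
      then show "c \<theta> \<in> Pring N" using c'(1) qP by (auto simp: c_def intro: Pring_add)
    next
      fix \<theta> assume "\<theta> \<notin> Lambda N n"
      then show "c \<theta> = 0" using c'(2) \<mu> by (auto simp: c_def)
    next
      fix \<kappa>
      have "(\<Sum>\<theta>\<in>Lambda N n. c \<theta> * twisted_schubert N n v \<theta> \<kappa>) =
          (\<Sum>\<theta>\<in>Lambda N n. c' \<theta> * twisted_schubert N n v \<theta> \<kappa> +
             (if \<theta> = \<mu> then q * twisted_schubert N n v \<mu> \<kappa> else 0))"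
        by (rule sum.cong) (auto simp: c_def algebra_simps)
      also have "\<dots> = \<alpha>' \<kappa> + q * S \<kappa>"
        using c'(3) \<mu> Lambda_finite by (simp add: sum.distrib S_def)
      also have "\<dots> = \<alpha> \<kappa>" by (simp add: \<alpha>'_def)
      finally show "\<alpha> \<kappa> = (\<Sum>\<theta>\<in>Lambda N n. c \<theta> * twisted_schubert N n v \<theta> \<kappa>)" by simp
    qed
  qed
qed

lemma basis_unique:
  assumes v: "v permutes {1..N}"
    and c1: "\<forall>\<theta>. \<theta> \<notin> Lambda N n \<longrightarrow> c \<theta> = 0"
    and c2: "\<forall>\<theta>. \<theta> \<notin> Lambda N n \<longrightarrow> c' \<theta> = 0"
    and e: "\<forall>\<mu>. (\<Sum>\<theta>\<in>Lambda N n. c \<theta> * twisted_schubert N n v \<theta> \<mu>) =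
               (\<Sum>\<theta>\<in>Lambda N n. c' \<theta> * twisted_schubert N n v \<theta> \<mu>)"
  shows "c = c'"
proof (rule ccontr)
  assume "c \<noteq> c'"
  then obtain \<theta>1 where "c \<theta>1 \<noteq> c' \<theta>1" by auto
  then obtain \<theta>0 where t0: "c \<theta>0 \<noteq> c' \<theta>0"
    and min: "\<forall>\<kappa>. c \<kappa> \<noteq> c' \<kappa> \<longrightarrow> len N (\<theta>0 \<circ> v) \<le> len N (\<kappa> \<circ> v)"
    using ex_has_least_nat[of "\<lambda>\<kappa>. c \<kappa> \<noteq> c' \<kappa>" \<theta>1 "\<lambda>\<kappa>. len N (\<kappa> \<circ> v)"] by blast
  have \<theta>0: "\<theta>0 \<in> Lambda N n"
  proof (rule ccontr)
    assume "\<theta>0 \<notin> Lambda N n"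
    then show False using t0 c1 c2 by simp
  qed
  have "0 = (\<Sum>\<theta>\<in>Lambda N n. c \<theta> * twisted_schubert N n v \<theta> \<theta>0) -
            (\<Sum>\<theta>\<in>Lambda N n. c' \<theta> * twisted_schubert N n v \<theta> \<theta>0)" using e by simp
  also have "\<dots> = (\<Sum>\<theta>\<in>Lambda N n. (c \<theta> - c' \<theta>) * twisted_schubert N n v \<theta> \<theta>0)"
    by (simp add: sum_subtractf left_diff_distrib)
  also have "\<dots> = (\<Sum>\<theta>\<in>Lambda N n. if \<theta> = \<theta>0 then (c \<theta>0 - c' \<theta>0) * Pv N v \<theta>0 else 0)"
  proof (rule sum.cong[OF refl])
    fix \<theta> assume \<theta>: "\<theta> \<in> Lambda N n"
    note T = ts_is(1)[OF v \<theta>]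
    show "(c \<theta> - c' \<theta>) * twisted_schubert N n v \<theta> \<theta>0 =
        (if \<theta> = \<theta>0 then (c \<theta>0 - c' \<theta>0) * Pv N v \<theta>0 else 0)"
    proof (cases "\<theta> = \<theta>0")
      case True then show ?thesis using ts_val[OF T] by simp
    next
      case False
      show ?thesis
      proof (cases "c \<theta> = c' \<theta> \<or> twisted_schubert N n v \<theta> \<theta>0 = 0")
        case True then show ?thesis using False by auto
      next
        case nt: False
        then have "dom_ge_w N v \<theta>0 \<theta>" using ts_supp[OF T \<theta>0] by blast
        then have "len N (\<theta> \<circ> v) < len N (\<theta>0 \<circ> v)" using ge_v_len(2)[OF v \<theta>0 \<theta>] False by metis
        then show ?thesis using min nt by force
      qed
    qed
  qed
  also have "\<dots> = (c \<theta>0 - c' \<theta>0) * Pv N v \<theta>0" using \<theta>0 Lambda_finite by simp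
  finally have "(c \<theta>0 - c' \<theta>0) * Pv N v \<theta>0 = 0" by simp
  then show False using t0 Pv_ne0 by simp
qed

lemma basis:
  assumes v: "v permutes {1..N}" and \<alpha>: "\<alpha> \<in> GKM N n"
  shows "\<exists>!c. (\<forall>\<theta>\<in>Lambda N n. c \<theta> \<in> Pring N) \<and> (\<forall>\<theta>. \<theta> \<notin> Lambda N n \<longrightarrow> c \<theta> = 0)
        \<and> (\<forall>\<mu>. \<alpha> \<mu> = (\<Sum>\<theta>\<in>Lambda N n. c \<theta> * twisted_schubert N n v \<theta> \<mu>))"
proof -
  have "upc N n v (Lambda N n)" by (simp add: upc_def)
  moreover have "\<forall>\<mu>. \<alpha> \<mu> \<noteq> 0 \<longrightarrow> \<mu> \<in> Lambda N n" using GKM_zero_out[OF \<alpha>] by blast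
  ultimately obtain c where c: "(\<forall>\<theta>\<in>Lambda N n. c \<theta> \<in> Pring N) \<and> (\<forall>\<theta>. \<theta> \<notin> Lambda N n \<longrightarrow> c \<theta> = 0)
        \<and> (\<forall>\<mu>. \<alpha> \<mu> = (\<Sum>\<theta>\<in>Lambda N n. c \<theta> * twisted_schubert N n v \<theta> \<mu>))"
    using basis_exists_gen[OF v _ \<alpha>] by blast
  show ?thesis
  proof (rule ex1I[of _ c])
    show "(\<forall>\<theta>\<in>Lambda N n. c \<theta> \<in> Pring N) \<and> (\<forall>\<theta>. \<theta> \<notin> Lambda N n \<longrightarrow> c \<theta> = 0)
        \<and> (\<forall>\<mu>. \<alpha> \<mu> = (\<Sum>\<theta>\<in>Lambda N n. c \<theta> * twisted_schubert N n v \<theta> \<mu>))" by (rule c)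
    fix d assume d: "(\<forall>\<theta>\<in>Lambda N n. d \<theta> \<in> Pring N) \<and> (\<forall>\<theta>. \<theta> \<notin> Lambda N n \<longrightarrow> d \<theta> = 0)
        \<and> (\<forall>\<mu>. \<alpha> \<mu> = (\<Sum>\<theta>\<in>Lambda N n. d \<theta> * twisted_schubert N n v \<theta> \<mu>))"
    show "d = c" by (rule basis_unique[OF v]) (use c d in auto)
  qed
qed

theorem proposition3p12:
  fixes N n i :: nat and w :: "nat \<Rightarrow> nat"
  assumes w: "w permutes {1..N}"
    and i: "1 \<le> i" "i < N"
  shows "(\<forall>lam \<in> Lambda N n. \<forall>mu \<in> Lambda N n.
            twisted_schubert N n (w \<circ> transpose i (i + 1)) lam mu =
              (if lam (w (i + 1)) > lam (w i)
               then twisted_schubert N n w (act (transpose (w i) (w (i + 1))) lam) mu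
                    + (tvar (w (i + 1)) - tvar (w i)) * twisted_schubert N n w lam mu
               else twisted_schubert N n w (act (transpose (w i) (w (i + 1))) lam) mu))
       \<and> (\<forall>v. v permutes {1..N} \<longrightarrow>
            (\<forall>lam \<in> Lambda N n. twisted_schubert N n v lam \<in> GKM N n)
          \<and> (\<forall>\<alpha> \<in> GKM N n. \<exists>!c. (\<forall>lam \<in> Lambda N n. c lam \<in> Pring N)
                 \<and> (\<forall>lam. lam \<notin> Lambda N n \<longrightarrow> c lam = 0)
                 \<and> (\<forall>mu. \<alpha> mu = (\<Sum>lam\<in>Lambda N n. c lam * twisted_schubert N n v lam mu))))"
proof (intro conjI ballI allI impI)
  fix v assume v: "v permutes {1..N}"
  fix lam assume "lam \<in> Lambda N n"
  then show "twisted_schubert N n v lam \<in> GKM N n" using ts_GKM[OF ts_is(1)[OF v]] by blast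
next
  fix v \<alpha> assume "v permutes {1..N}" "\<alpha> \<in> GKM N n"
  then show "\<exists>!c. (\<forall>lam \<in> Lambda N n. c lam \<in> Pring N)
                 \<and> (\<forall>lam. lam \<notin> Lambda N n \<longrightarrow> c lam = 0)
                 \<and> (\<forall>mu. \<alpha> mu = (\<Sum>lam\<in>Lambda N n. c lam * twisted_schubert N n v lam mu))"
    by (rule basis)
next
  fix lam mu assume lam: "lam \<in> Lambda N n" and mu: "mu \<in> Lambda N n"
  interpret S: sctx N n i using i by unfold_locales auto
  let ?s = "transpose i (Suc i)"
  have ws: "w \<circ> ?s permutes {1..N}" by (rule permutes_compose[OF S.s_perm w])
  define \<nu> where "\<nu> = lam \<circ> w"
  define x where "x = mu \<circ> w"
  define \<kappa> where "\<kappa> = \<nu> \<circ> ?s"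
  have \<nu>L: "\<nu> \<in> Lambda N n" unfolding \<nu>_def by (rule Lambda_perm[OF w lam])
  have xL: "x \<in> Lambda N n" unfolding x_def by (rule Lambda_perm[OF w mu])
  have \<kappa>L: "\<kappa> \<in> Lambda N n" unfolding \<kappa>_def by (rule Lambda_perm[OF S.s_perm \<nu>L])
  define \<alpha> where "\<alpha> = twisted_schubert N n id \<kappa>"
  have A: "is_twisted_schubert N n id \<kappa> \<alpha>" unfolding \<alpha>_def using ts_is(1)[OF id_permutes \<kappa>L] by simp
  have \<alpha>G: "\<alpha> \<in> GKM N n" using ts_GKM[OF A] .
  have lhs: "twisted_schubert N n (w \<circ> ?s) lam mu = Pperm w (Pperm ?s (\<alpha> (x \<circ> ?s)))"
    using ts_is(2)[OF ws lam] mu by (simp add: conjc_def \<alpha>_def \<kappa>_def \<nu>_def x_def comp_assoc Pperm_comp)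
  have sp: "Pperm ?s (\<alpha> (x \<circ> ?s)) = \<alpha> x - S.L * delta N n i \<alpha> x"
    using S.delta_spec[OF \<alpha>G xL] by (simp add: algebra_simps)
  define tl where "tl = act (transpose (w i) (w (i + 1))) lam"
  have tlw: "tl \<circ> w = \<kappa>"
  proof -
    have "transpose (w i) (w (Suc i)) \<circ> w = w \<circ> ?s"
      using transpose_comp_eq[OF permutes_bij[OF w], of "w i" "w (Suc i)"]
      by (simp add: permutes_inverses(2)[OF w])
    then show ?thesis by (simp add: tl_def act_transpose \<kappa>_def \<nu>_def comp_assoc)
  qed
  have tlL: "tl \<in> Lambda N n" unfolding tl_def act_transpose
    by (rule Lambda_perm[OF transpose_permutes lam]) (use i permutes_in_image[OF w] in auto)
  have r1: "twisted_schubert N n w tl mu = Pperm w (\<alpha> x)"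
    using ts_is(2)[OF w tlL] mu tlw by (simp add: conjc_def \<alpha>_def x_def)
  have r2: "twisted_schubert N n w lam mu = Pperm w (twisted_schubert N n id \<nu> x)"
    using ts_is(2)[OF w lam] mu by (simp add: conjc_def \<nu>_def x_def)
  have PL: "Pperm w S.L = tvar (w i) - tvar (w (Suc i))" by (simp add: Pperm_diff)
  have main: "twisted_schubert N n (w \<circ> ?s) lam mu = Pperm w (\<alpha> x) - (tvar (w i) - tvar (w (Suc i))) * Pperm w (delta N n i \<alpha> x)"
    unfolding lhs sp by (simp add: Pperm_diff Pperm_mult PL)
  have kv: "\<kappa> i = \<nu> (Suc i)" "\<kappa> (Suc i) = \<nu> i" by (simp_all add: \<kappa>_def)
  show "twisted_schubert N n (w \<circ> transpose i (i + 1)) lam mu =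
              (if lam (w (i + 1)) > lam (w i)
               then twisted_schubert N n w (act (transpose (w i) (w (i + 1))) lam) mu
                    + (tvar (w (i + 1)) - tvar (w i)) * twisted_schubert N n w lam mu
               else twisted_schubert N n w (act (transpose (w i) (w (i + 1))) lam) mu)"
  proof (cases "lam (w (i + 1)) > lam (w i)")
    case True
    then have "\<nu> (Suc i) > \<nu> i" by (simp add: \<nu>_def)
    then have k: "\<kappa> i = 1" "\<kappa> (Suc i) = 0" using kv Lambda_le1[OF \<nu>L, of "Suc i"] by auto
    have "is_twisted_schubert N n id (\<kappa> \<circ> ?s) (delta N n i \<alpha>)" by (rule S.delta_class[OF \<kappa>L k A])
    moreover have "\<kappa> \<circ> ?s = \<nu>" by (simp add: \<kappa>_def)
    ultimately have "delta N n i \<alpha> = twisted_schubert N n id \<nu>" using ts_eq[OF id_permutes] by metis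
    then show ?thesis using True main r1 r2 by (simp add: tl_def algebra_simps)
  next
    case False
    then have "\<not> (\<kappa> i = 1 \<and> \<kappa> (Suc i) = 0)" using kv by (auto simp: \<nu>_def)
    then have "delta N n i \<alpha> x = 0" by (rule S.delta_zero[OF \<kappa>L _ A])
    then show ?thesis using False main r1 by (simp add: tl_def)
  qed
qed


end
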